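(* Let $r\le 1$ and let $u$ be a minimizer of $G(v)=\int_{B_r}\tfrac12|\nabla v|^2+g(v)$ on $B_r$, where $g$ satisfies $|g(t)-g(s)|\le\eta(t-s)$ for all $t,s\in\mathbb R$. There are constants $c_*>0$ and $C$, depending only on $n$ and $C_0$, such that if $\operatorname{osc}_{B_r}u\le c_*$ and $h$ is the harmonic function in $B_r$ with $h=u$ on $\partial B_r$, then \[ \frac{1}{|B_r|}\int_{B_r}|\nabla(u-h)|^2\le C\,\frac{\eta^2(r^2)}{r^2}. \]
   Context: Fix $C_0>0$ and set $\eta(t)=C_0|t|(1+|\log|t||)$ for $t\ne0$, $\eta(0)=0$. A function $u\in H^1(\Omega)$ is a minimizer of $G$ on $\Omega$ if $G(u)\le G(v)$ for all $v\in H^1(\Omega)$ with $v-u\in H^1_0(\Omega)$. $B_r$ is the ball of radius $r$ centered at $0$ in $\mathbb R^n$, $n\ge3$. *)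

theory Defs
  imports "HOL-Analysis.Analysis" "HOL-Probability.Essential_Supremum"
begin

definition eta :: "real \<Rightarrow> real \<Rightarrow> real" where
  "eta C0 t = (if t = 0 then 0 else C0 * \<bar>t\<bar> * (1 + \<bar>ln \<bar>t\<bar>\<bar>))"

definition test_fun :: "(real^'n::finite) set \<Rightarrow> (real^'n \<Rightarrow> real) \<Rightarrow> (real^'n \<Rightarrow> real^'n) \<Rightarrow> bool" where
  "test_fun S phi dphi \<longleftrightarrow>
     (\<forall>x. (phi has_derivative (\<lambda>v. dphi x \<bullet> v)) (at x)) \<and> continuous_on UNIV dphi \<and>
     compact (closure {x. phi x \<noteq> 0}) \<and> closure {x. phi x \<noteq> 0} \<subseteq> S"

definition weak_grad :: "(real^'n::finite) set \<Rightarrow> (real^'n \<Rightarrow> real) \<Rightarrow> (real^'n \<Rightarrow> real^'n) \<Rightarrow> bool" where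
  "weak_grad S u Du \<longleftrightarrow>
     (\<forall>phi dphi. test_fun S phi dphi \<longrightarrow>
        integral\<^sup>L (lebesgue_on S) (\<lambda>x. u x *\<^sub>R dphi x)
          = - integral\<^sup>L (lebesgue_on S) (\<lambda>x. phi x *\<^sub>R Du x))"

definition H1 :: "(real^'n::finite) set \<Rightarrow> (real^'n \<Rightarrow> real) \<Rightarrow> (real^'n \<Rightarrow> real^'n) \<Rightarrow> bool" where
  "H1 S u Du \<longleftrightarrow>
     u \<in> borel_measurable (lebesgue_on S) \<and> Du \<in> borel_measurable (lebesgue_on S) \<and>
     integrable (lebesgue_on S) (\<lambda>x. (u x)\<^sup>2) \<and>
     integrable (lebesgue_on S) (\<lambda>x. (norm (Du x))\<^sup>2) \<and>
     weak_grad S u Du"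

definition H1_0 :: "(real^'n::finite) set \<Rightarrow> (real^'n \<Rightarrow> real) \<Rightarrow> (real^'n \<Rightarrow> real^'n) \<Rightarrow> bool" where
  "H1_0 S u Du \<longleftrightarrow> H1 S u Du \<and>
     (\<exists>phi dphi. (\<forall>k. test_fun S (phi k) (dphi k)) \<and>
        (\<lambda>k. integral\<^sup>L (lebesgue_on S)
               (\<lambda>x. (phi k x - u x)\<^sup>2 + (norm (dphi k x - Du x))\<^sup>2)) \<longlonglongrightarrow> 0)"

definition Gfun :: "(real^'n::finite) set \<Rightarrow> (real \<Rightarrow> real) \<Rightarrow> (real^'n \<Rightarrow> real) \<Rightarrow> (real^'n \<Rightarrow> real^'n) \<Rightarrow> real" where
  "Gfun S g v Dv = integral\<^sup>L (lebesgue_on S) (\<lambda>x. (norm (Dv x))\<^sup>2 / 2 + g (v x))"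

definition minimizer :: "(real^'n::finite) set \<Rightarrow> (real \<Rightarrow> real) \<Rightarrow> (real^'n \<Rightarrow> real) \<Rightarrow> (real^'n \<Rightarrow> real^'n) \<Rightarrow> bool" where
  "minimizer S g u Du \<longleftrightarrow> H1 S u Du \<and>
     (\<forall>v Dv. H1 S v Dv \<and> H1_0 S (\<lambda>x. v x - u x) (\<lambda>x. Dv x - Du x) \<longrightarrow> Gfun S g u Du \<le> Gfun S g v Dv)"

definition ess_osc :: "(real^'n::finite) set \<Rightarrow> (real^'n \<Rightarrow> real) \<Rightarrow> ereal" where
  "ess_osc S u = esssup (lebesgue_on S) (\<lambda>x. ereal (u x))
                 - (- esssup (lebesgue_on S) (\<lambda>x. - ereal (u x)))"

text \<open>Classical harmonic functions: C^2 on S with vanishing Laplacian.\<close>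
definition harmonic_on :: "(real^'n::finite) set \<Rightarrow> (real^'n \<Rightarrow> real) \<Rightarrow> bool" where
  "harmonic_on S h \<longleftrightarrow>
     (\<exists>Dh D2h. (\<forall>x\<in>S. (h has_derivative (\<lambda>v. Dh x \<bullet> v)) (at x)) \<and>
               (\<forall>x\<in>S. (Dh has_derivative D2h x) (at x)) \<and>
               continuous_on S (\<lambda>x. \<chi> i j. D2h x (axis j 1) $ i) \<and>
               (\<forall>x\<in>S. (\<Sum>i\<in>UNIV. D2h x (axis i 1) $ i) = 0))"

end

theory Submission
  imports Defs
begin


lemma lebesgue_transl_eq:
  fixes a :: "'a::euclidean_space"
  shows "distr lebesgue lebesgue (\<lambda>x. a + x) = lebesgue"
    and "(\<lambda>x. a + x) \<in> lebesgue \<rightarrow>\<^sub>M lebesgue"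
proof -
  have "(\<Sum>j\<in>Basis. (1 * (x \<bullet> j)) *\<^sub>R j) = x" for x :: 'a
    by (simp add: euclidean_representation)
  then have T: "(\<lambda>x. a + (\<Sum>j\<in>Basis. (1 * (x \<bullet> j)) *\<^sub>R j)) = (\<lambda>x. a + x)" by auto
  from lebesgue_affine_euclidean[of "\<lambda>_. 1" a] lebesgue_affine_measurable[of "\<lambda>_. 1" a]
  show "distr lebesgue lebesgue (\<lambda>x. a + x) = lebesgue" "(\<lambda>x. a + x) \<in> lebesgue \<rightarrow>\<^sub>M lebesgue"
    unfolding T by (auto simp: density_1)
qed

lemma lebesgue_transl:
  fixes a :: "'a::euclidean_space" and f :: "'a \<Rightarrow> 'b::{banach,second_countable_topology}"
  assumes "f \<in> borel_measurable lebesgue"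
  shows "integral\<^sup>L lebesgue (\<lambda>x. f (a + x)) = integral\<^sup>L lebesgue f"
    and "integrable lebesgue (\<lambda>x. f (a + x)) \<longleftrightarrow> integrable lebesgue f"
    and "(\<lambda>x. f (a + x)) \<in> borel_measurable lebesgue"
proof -
  note L = lebesgue_transl_eq[of a]
  show "integral\<^sup>L lebesgue (\<lambda>x. f (a + x)) = integral\<^sup>L lebesgue f"
    using integral_distr[OF L(2) assms] L(1) by simp
  show "integrable lebesgue (\<lambda>x. f (a + x)) \<longleftrightarrow> integrable lebesgue f"
    using integrable_distr_eq[OF L(2) assms] L(1) by simp
  show "(\<lambda>x. f (a + x)) \<in> borel_measurable lebesgue"
    using measurable_comp[OF L(2) assms] by (simp add: o_def)
qed



lemma cont_meas_leb:
  fixes G :: "'a::euclidean_space \<Rightarrow> 'b::euclidean_space"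
  shows "continuous_on UNIV G \<Longrightarrow> G \<in> borel_measurable lebesgue"
  using continuous_imp_measurable_on_sets_lebesgue[of UNIV G] by (simp add: lebesgue_on_UNIV_eq)

lemma cont_compact_supp_integrable:
  fixes G :: "'a::euclidean_space \<Rightarrow> real"
  assumes cont: "continuous_on UNIV G" and K: "compact K" and supp: "\<And>x. x \<notin> K \<Longrightarrow> G x = 0"
  shows "integrable lebesgue G"
proof -
  obtain B where B: "\<And>x. x \<in> K \<Longrightarrow> norm (G x) \<le> B"
    using compact_imp_bounded[OF compact_continuous_image[OF continuous_on_subset[OF cont] K]]
    by (auto simp: bounded_iff)
  have meas: "G \<in> borel_measurable lebesgue"
    by (rule cont_meas_leb[OF cont])
  have Kf: "K \<in> sets lebesgue" "emeasure lebesgue K < \<infinity>"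
    using fmeasurable_compact[OF K] by (auto simp: fmeasurable_def)
  have "integrable lebesgue (\<lambda>x. B * indicator K x)"
    using Kf by auto
  then show ?thesis
    by (rule Bochner_Integration.integrable_bound[OF _ meas]) (auto intro!: AE_I2 simp: indicator_def supp; metis B abs_ge_self order_trans real_norm_def)
qed

lemma div_zero:
  fixes G G' :: "'a::euclidean_space \<Rightarrow> real" and e :: 'a
  assumes deriv: "\<And>x. ((\<lambda>t. G (x + t *\<^sub>R e)) has_real_derivative G' x) (at 0)"
    and bnd: "\<And>x. \<bar>G' x\<bar> \<le> M"
    and cont: "continuous_on UNIV G"
    and K: "compact K" and supp: "\<And>x. x \<notin> K \<Longrightarrow> G x = 0"
  shows "integrable lebesgue G'" "integral\<^sup>L lebesgue G' = 0"
proof -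
  have M0: "M \<ge> 0" using bnd[of 0] by linarith
  define c :: "nat \<Rightarrow> real" where "c k = inverse (real (Suc k))" for k
  define q where "q k x = (G (x + c k *\<^sub>R e) - G x) / c k" for k x
  have c0: "c k > 0" "c k \<le> 1" for k by (auto simp: c_def field_simps)
  have clim: "c \<longlonglongrightarrow> 0" unfolding c_def by (rule LIMSEQ_inverse_real_of_nat)
  have measG: "G \<in> borel_measurable lebesgue"
    by (rule cont_meas_leb[OF cont])
  have Gint: "integrable lebesgue G" by (rule cont_compact_supp_integrable[OF cont K supp])
  have measq: "q k \<in> borel_measurable lebesgue" for k
  proof -
    have "(\<lambda>x. G (c k *\<^sub>R e + x)) \<in> borel_measurable lebesgue"
      by (rule lebesgue_transl(3)[OF measG])
    then show ?thesis unfolding q_def using measG by (simp add: add.commute)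
  qed
  have intq: "integral\<^sup>L lebesgue (q k) = 0" for k
  proof -
    have i1: "integrable lebesgue (\<lambda>x. G (c k *\<^sub>R e + x))"
      using lebesgue_transl(2)[OF measG] Gint by simp
    have "integral\<^sup>L lebesgue (q k) = (integral\<^sup>L lebesgue (\<lambda>x. G (c k *\<^sub>R e + x)) - integral\<^sup>L lebesgue G) / c k"
      unfolding q_def using i1 Gint by (simp add: add.commute)
    also have "\<dots> = 0" using lebesgue_transl(1)[OF measG] by simp
    finally show ?thesis .
  qed
  have der_all: "DERIV (\<lambda>t. G (x + t *\<^sub>R e)) t :> G' (x + t *\<^sub>R e)" for x t
  proof -
    have "((\<lambda>s. G ((x + t *\<^sub>R e) + s *\<^sub>R e)) has_real_derivative G' (x + t *\<^sub>R e)) (at 0)"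
      by (rule deriv)
    then have "((\<lambda>s. G (x + (s + t) *\<^sub>R e)) has_real_derivative G' (x + t *\<^sub>R e)) (at 0)"
      by (simp add: algebra_simps)
    then show ?thesis using DERIV_shift[of "\<lambda>t. G (x + t *\<^sub>R e)" "G' (x + t *\<^sub>R e)" 0 t] by simp
  qed
  have lim: "(\<lambda>k. q k x) \<longlonglongrightarrow> G' x" for x
  proof -
    have "(\<lambda>h. (G (x + (0 + h) *\<^sub>R e) - G (x + 0 *\<^sub>R e)) / h) \<midarrow>0\<rightarrow> G' x"
      using deriv[of x] unfolding DERIV_def by simp
    then have "(\<lambda>h. (G (x + h *\<^sub>R e) - G x) / h) \<midarrow>0\<rightarrow> G' x" by simp
    then have "\<forall>S. (\<forall>n. S n \<noteq> 0) \<and> S \<longlonglongrightarrow> 0 \<longrightarrow> (\<lambda>n. (G (x + S n *\<^sub>R e) - G x) / S n) \<longlonglongrightarrow> G' x"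
      using LIMSEQ_SEQ_conv[of 0 "\<lambda>h. (G (x + h *\<^sub>R e) - G x) / h" "G' x"] by simp
    then have "(\<forall>n. c n \<noteq> 0) \<and> c \<longlonglongrightarrow> 0 \<longrightarrow> (\<lambda>n. (G (x + c n *\<^sub>R e) - G x) / c n) \<longlonglongrightarrow> G' x"
      by (rule spec)
    moreover have "\<forall>n. c n \<noteq> 0" using c0(1) by (simp add: less_imp_neq[symmetric])
    ultimately show ?thesis unfolding q_def using clim by simp
  qed
  define K' where "K' = (\<lambda>p. fst p + snd p *\<^sub>R e) ` (K \<times> {-1..0})"
  have K': "compact K'" unfolding K'_def
    by (intro compact_continuous_image compact_Times K compact_Icc continuous_intros)
  have KK': "K \<subseteq> K'"
  proof
    fix x assume "x \<in> K"
    then have "(x, 0::real) \<in> K \<times> {-1..0}" by auto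
    then show "x \<in> K'" unfolding K'_def by (rule image_eqI[rotated]) simp
  qed
  have bound: "\<bar>q k x\<bar> \<le> M * indicator K' x" for k x
  proof (cases "x \<in> K'")
    case True
    have "\<exists>z. 0 < z \<and> z < c k \<and> G (x + c k *\<^sub>R e) - G (x + 0 *\<^sub>R e) = (c k - 0) * G' (x + z *\<^sub>R e)"
      by (rule MVT2[of 0 "c k" "\<lambda>t. G (x + t *\<^sub>R e)" "\<lambda>t. G' (x + t *\<^sub>R e)"]) (use c0 der_all in auto)
    then obtain z where "0 < z" "z < c k" and eq: "G (x + c k *\<^sub>R e) - G (x + 0 *\<^sub>R e) = (c k - 0) * G' (x + z *\<^sub>R e)"
      by blast
    then have "q k x = G' (x + z *\<^sub>R e)" unfolding q_def using c0[of k] by (simp add: field_simps)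
    then show ?thesis using True bnd by simp
  next
    case False
    then have "x \<notin> K" using KK' by auto
    moreover have "x + c k *\<^sub>R e \<notin> K"
    proof
      assume "x + c k *\<^sub>R e \<in> K"
      then have "(x + c k *\<^sub>R e, - c k) \<in> K \<times> {-1..0}" using c0[of k] by auto
      then have "x \<in> K'" unfolding K'_def by (rule image_eqI[rotated]) simp
      then show False using False by simp
    qed
    ultimately show ?thesis unfolding q_def using supp M0 by simp
  qed
  have K'f: "K' \<in> sets lebesgue" "emeasure lebesgue K' < \<infinity>"
    using fmeasurable_compact[OF K'] by (auto simp: fmeasurable_def)
  have wint: "integrable lebesgue (\<lambda>x. M * indicator K' x)" using K'f by auto
  have measG': "G' \<in> borel_measurable lebesgue"
    by (rule borel_measurable_LIMSEQ_real[OF lim measq])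
  have bound': "AE x in lebesgue. norm (q k x) \<le> M * indicator K' x" for k
    using bound by auto
  show "integrable lebesgue G'"
    by (rule integrable_dominated_convergence[where s=q, OF measG' measq wint]) (use bound in \<open>auto simp: lim intro!: AE_I2\<close>)
  have "(\<lambda>k. integral\<^sup>L lebesgue (q k)) \<longlonglongrightarrow> integral\<^sup>L lebesgue G'"
    by (rule integral_dominated_convergence[where s=q, OF measG' measq wint]) (use bound in \<open>auto simp: lim intro!: AE_I2\<close>)
  then show "integral\<^sup>L lebesgue G' = 0" using intq by (simp add: LIMSEQ_const_iff)
qed



lemma dir_deriv:
  fixes f :: "'a::real_normed_vector \<Rightarrow> real"
  assumes "(f has_derivative f') (at x)"
  shows "((\<lambda>t. f (x + t *\<^sub>R e)) has_real_derivative f' e) (at 0)"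
proof -
  have lin: "linear f'" using has_derivative_bounded_linear[OF assms] bounded_linear.linear by blast
  have "((\<lambda>t. x + t *\<^sub>R e) has_derivative (\<lambda>t. t *\<^sub>R e)) (at 0)"
    by (auto intro!: derivative_eq_intros)
  then have "((\<lambda>t. f (x + t *\<^sub>R e)) has_derivative (\<lambda>t. f' (t *\<^sub>R e))) (at 0)"
    using has_derivative_compose[of "\<lambda>t. x + t *\<^sub>R e" _ 0 UNIV f f'] assms by simp
  moreover have "(\<lambda>t. f' (t *\<^sub>R e)) = (*) (f' e)"
    using linear_scale[OF lin] by (auto simp: mult.commute)
  ultimately show ?thesis by (simp add: has_field_derivative_def)
qed

lemma bounded_supp:
  fixes f :: "'a::euclidean_space \<Rightarrow> 'b::real_normed_vector"
  assumes cont: "continuous_on UNIV f" and K: "compact K" and supp: "\<And>x. x \<notin> K \<Longrightarrow> f x = 0"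
  shows "\<exists>B\<ge>0. \<forall>x. norm (f x) \<le> B"
proof -
  obtain B where B: "\<And>x. x \<in> K \<Longrightarrow> norm (f x) \<le> B"
    using compact_imp_bounded[OF compact_continuous_image[OF continuous_on_subset[OF cont] K]]
    by (auto simp: bounded_iff)
  show ?thesis
    by (rule exI[of _ "max B 0"]) (use B supp in \<open>auto simp: le_max_iff_disj\<close>)
qed

definition supp :: "('a::topological_space \<Rightarrow> real) \<Rightarrow> 'a set" where
  "supp phi = closure {x. phi x \<noteq> 0}"

lemma tf_facts:
  fixes phi :: "real^'n::finite \<Rightarrow> real"
  assumes "test_fun S phi dphi"
  shows "\<And>x. (phi has_derivative (\<lambda>v. dphi x \<bullet> v)) (at x)"
    and "continuous_on UNIV dphi" and "compact (supp phi)" and "supp phi \<subseteq> S"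
    and "continuous_on UNIV phi"
    and "\<And>x. x \<notin> supp phi \<Longrightarrow> phi x = 0"
    and "\<And>x. x \<notin> supp phi \<Longrightarrow> dphi x = 0"
proof -
  show d: "\<And>x. (phi has_derivative (\<lambda>v. dphi x \<bullet> v)) (at x)"
    and "continuous_on UNIV dphi" and "compact (supp phi)" and "supp phi \<subseteq> S"
    using assms unfolding test_fun_def supp_def by auto
  show "continuous_on UNIV phi"
    by (intro continuous_at_imp_continuous_on ballI has_derivative_continuous[OF d])
  show z: "\<And>x. x \<notin> supp phi \<Longrightarrow> phi x = 0"
    using closure_subset[of "{x. phi x \<noteq> 0}"] unfolding supp_def by auto
  fix x assume x: "x \<notin> supp phi"
  have op: "open (- supp phi)" unfolding supp_def by auto
  have "((\<lambda>y. 0::real) has_derivative (\<lambda>v. 0)) (at x)" by simp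
  then have "(phi has_derivative (\<lambda>v. 0)) (at x)"
    by (rule has_derivative_transform_within_open[OF _ op]) (use x z in auto)
  then have "(\<lambda>v. dphi x \<bullet> v) = (\<lambda>v. 0)" by (rule has_derivative_unique[OF d[of x]])
  then have "dphi x \<bullet> dphi x = 0" by (rule fun_cong)
  then show "dphi x = 0" by simp
qed

lemma tf_bounds:
  fixes phi :: "real^'n::finite \<Rightarrow> real"
  assumes "test_fun S phi dphi"
  shows "\<exists>B\<ge>0. \<forall>x. \<bar>phi x\<bar> \<le> B" and "\<exists>B\<ge>0. \<forall>x. norm (dphi x) \<le> B"
  using bounded_supp[OF tf_facts(5)[OF assms] tf_facts(3)[OF assms] tf_facts(6)[OF assms]]
    bounded_supp[OF tf_facts(2)[OF assms] tf_facts(3)[OF assms] tf_facts(7)[OF assms]]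
  by auto

lemma on_set_integral:
  fixes f :: "'a::euclidean_space \<Rightarrow> 'b::{banach,second_countable_topology}"
  assumes S: "S \<in> sets lebesgue" and z: "\<And>x. x \<notin> S \<Longrightarrow> f x = 0"
  shows "integral\<^sup>L (lebesgue_on S) f = integral\<^sup>L lebesgue f"
    and "integrable (lebesgue_on S) f \<longleftrightarrow> integrable lebesgue f"
proof -
  have eq: "(\<lambda>x. indicator S x *\<^sub>R f x) = f" using z by (auto simp: indicator_def)
  show "integral\<^sup>L (lebesgue_on S) f = integral\<^sup>L lebesgue f"
    using integral_restrict_space[of S lebesgue f] S eq by simp
  show "integrable (lebesgue_on S) f \<longleftrightarrow> integrable lebesgue f"
    using integrable_restrict_space[of S lebesgue f] S eq by simp
qed



lemma amgm: "2 * a * b \<le> a\<^sup>2 / 2 + 2 * b\<^sup>2" for a b :: real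
proof -
  have "0 \<le> (a - 2 * b)\<^sup>2" by simp
  then show ?thesis by (simp add: power2_eq_square algebra_simps)
qed

lemma tf_integrable_sq:
  fixes phi :: "real^'n::finite \<Rightarrow> real"
  assumes tf: "test_fun S phi dphi"
  shows "integrable lebesgue (\<lambda>x. (phi x)\<^sup>2)" "integrable lebesgue (\<lambda>x. (norm (dphi x))\<^sup>2)"
proof -
  note F = tf_facts[OF tf]
  show "integrable lebesgue (\<lambda>x. (phi x)\<^sup>2)"
    by (rule cont_compact_supp_integrable[OF _ F(3)]) (use F in \<open>auto intro!: continuous_intros\<close>)
  show "integrable lebesgue (\<lambda>x. (norm (dphi x))\<^sup>2)"
    by (rule cont_compact_supp_integrable[OF _ F(3)]) (use F in \<open>auto intro!: continuous_intros\<close>)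
qed

lemma poincare_tf:
  fixes phi :: "real^'n::finite \<Rightarrow> real"
  assumes tf: "test_fun (ball 0 r) phi dphi"
  shows "integral\<^sup>L lebesgue (\<lambda>x. (phi x)\<^sup>2) \<le> 4 * r\<^sup>2 * integral\<^sup>L lebesgue (\<lambda>x. (norm (dphi x))\<^sup>2)"
proof -
  note F = tf_facts[OF tf]
  obtain B1 where B1: "B1 \<ge> 0" "\<And>x. \<bar>phi x\<bar> \<le> B1" using tf_bounds(1)[OF tf] by blast
  obtain B2 where B2: "B2 \<ge> 0" "\<And>x. norm (dphi x) \<le> B2" using tf_bounds(2)[OF tf] by blast
  obtain i :: 'n where True by simp
  define e :: "real^'n" where "e = axis i 1"
  define G where "G x = (phi x)\<^sup>2 * x $ i" for x
  define G' where "G' x = 2 * phi x * dphi x $ i * x $ i + (phi x)\<^sup>2" for x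
  define K where "K = supp phi"
  have xK: "\<bar>x $ i\<bar> \<le> \<bar>r\<bar>" if "x \<in> K" for x
  proof -
    have "x \<in> ball 0 r" using that F(4) K_def by auto
    then have "norm x < r" by simp
    then show ?thesis using component_le_norm_cart[of x i] by linarith
  qed
  have deriv: "((\<lambda>t. G (x + t *\<^sub>R e)) has_real_derivative G' x) (at 0)" for x
  proof -
    have p: "((\<lambda>t. phi (x + t *\<^sub>R e)) has_real_derivative dphi x $ i) (at 0)"
      using dir_deriv[OF F(1)[of x], of e] by (simp add: e_def inner_axis)
    have q: "((\<lambda>t. x $ i + t) has_real_derivative 1) (at 0)"
      by (auto intro!: derivative_eq_intros)
    have "((\<lambda>t. phi (x + t *\<^sub>R e) * phi (x + t *\<^sub>R e) * (x $ i + t)) has_real_derivative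
       (dphi x $ i * phi (x + 0 *\<^sub>R e) + dphi x $ i * phi (x + 0 *\<^sub>R e)) * (x $ i + 0)
        + 1 * (phi (x + 0 *\<^sub>R e) * phi (x + 0 *\<^sub>R e))) (at 0)"
      by (rule DERIV_mult[OF DERIV_mult[OF p p] q])
    moreover have "(\<lambda>t. G (x + t *\<^sub>R e)) = (\<lambda>t. phi (x + t *\<^sub>R e) * phi (x + t *\<^sub>R e) * (x $ i + t))"
      by (auto simp: G_def e_def power2_eq_square)
    ultimately show ?thesis by (simp add: G'_def power2_eq_square algebra_simps)
  qed
  define M where "M = 2 * B1 * B2 * \<bar>r\<bar> + B1\<^sup>2"
  have bnd: "\<bar>G' x\<bar> \<le> M" for x
  proof (cases "x \<in> K")
    case True
    have a: "\<bar>2 * phi x * dphi x $ i * x $ i\<bar> \<le> 2 * B1 * B2 * \<bar>r\<bar>"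
    proof -
      have "\<bar>dphi x $ i\<bar> \<le> B2" using component_le_norm_cart[of "dphi x" i] B2(2)[of x] by linarith
      then have "\<bar>phi x\<bar> * \<bar>dphi x $ i\<bar> * \<bar>x $ i\<bar> \<le> B1 * B2 * \<bar>r\<bar>"
        using B1 B2 xK[OF True] by (intro mult_mono) auto
      then show ?thesis by (simp add: abs_mult)
    qed
    have b: "(phi x)\<^sup>2 \<le> B1\<^sup>2" using B1 by (metis abs_ge_zero power2_abs power_mono)
    show ?thesis unfolding G'_def M_def using a b by (smt (verit) zero_le_power2)
  next
    case False
    then have "phi x = 0" using F(6) K_def by auto
    then show ?thesis unfolding G'_def M_def using B1 B2 by simp
  qed
  have cont: "continuous_on UNIV G" unfolding G_def using F(5) by (auto intro!: continuous_intros)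
  have supp0: "G x = 0" if "x \<notin> K" for x unfolding G_def using F(6) that K_def by simp
  have K: "compact K" using F(3) K_def by simp
  note D = div_zero[OF deriv bnd cont K supp0]
  note I = tf_integrable_sq[OF tf]
  have ptw: "(phi x)\<^sup>2 \<le> G' x + (1/2) * (phi x)\<^sup>2 + 2 * r\<^sup>2 * (norm (dphi x))\<^sup>2" for x
  proof (cases "x \<in> K")
    case True
    have "- (2 * phi x * dphi x $ i * x $ i) \<le> 2 * \<bar>phi x\<bar> * (\<bar>r\<bar> * norm (dphi x))"
    proof -
      have "\<bar>dphi x $ i\<bar> * \<bar>x $ i\<bar> \<le> norm (dphi x) * \<bar>r\<bar>"
        using component_le_norm_cart[of "dphi x" i] xK[OF True] by (intro mult_mono) auto
      then have "\<bar>phi x\<bar> * (\<bar>dphi x $ i\<bar> * \<bar>x $ i\<bar>) \<le> \<bar>phi x\<bar> * (norm (dphi x) * \<bar>r\<bar>)"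
        by (intro mult_left_mono) auto
      have "- (2 * phi x * dphi x $ i * x $ i) \<le> \<bar>2 * phi x * dphi x $ i * x $ i\<bar>" by linarith
      also have "\<dots> = 2 * (\<bar>phi x\<bar> * (\<bar>dphi x $ i\<bar> * \<bar>x $ i\<bar>))" by (simp add: abs_mult)
      also have "\<dots> \<le> 2 * (\<bar>phi x\<bar> * (norm (dphi x) * \<bar>r\<bar>))" using \<open>\<bar>phi x\<bar> * (\<bar>dphi x $ i\<bar> * \<bar>x $ i\<bar>) \<le> \<bar>phi x\<bar> * (norm (dphi x) * \<bar>r\<bar>)\<close> by linarith
      also have "\<dots> = 2 * \<bar>phi x\<bar> * (\<bar>r\<bar> * norm (dphi x))" by (simp add: algebra_simps)
      finally show ?thesis .
    qed
    also have "\<dots> \<le> (\<bar>phi x\<bar>)\<^sup>2 / 2 + 2 * (\<bar>r\<bar> * norm (dphi x))\<^sup>2" by (rule amgm)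
    finally show ?thesis unfolding G'_def by (simp add: power_mult_distrib)
  next
    case False
    then have "phi x = 0" using F(6) K_def by auto
    then show ?thesis unfolding G'_def by simp
  qed
  have "integral\<^sup>L lebesgue (\<lambda>x. (phi x)\<^sup>2) \<le>
        integral\<^sup>L lebesgue (\<lambda>x. G' x + (1/2) * (phi x)\<^sup>2 + 2 * r\<^sup>2 * (norm (dphi x))\<^sup>2)"
    by (rule integral_mono) (use I D ptw in auto)
  also have "\<dots> = integral\<^sup>L lebesgue G' + (1/2) * integral\<^sup>L lebesgue (\<lambda>x. (phi x)\<^sup>2)
      + 2 * r\<^sup>2 * integral\<^sup>L lebesgue (\<lambda>x. (norm (dphi x))\<^sup>2)"
    using I D by simp
  finally show ?thesis using D by simp
qed



lemma deriv_loc0: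
  assumes "open U" "x \<in> U" "\<And>y. y \<in> U \<Longrightarrow> f y = 0"
  shows "(f has_derivative (\<lambda>v. 0)) (at x)"
proof -
  have "((\<lambda>y. 0) has_derivative (\<lambda>v. 0)) (at x)" by simp
  then show ?thesis by (rule has_derivative_transform_within_open[OF _ assms(1,2)]) (use assms(3) in auto)
qed

lemma bound_on_compact:
  fixes f :: "'a::metric_space \<Rightarrow> 'b::real_normed_vector"
  assumes "continuous_on U f" "compact K" "K \<subseteq> U"
  shows "\<exists>B\<ge>0. \<forall>x\<in>K. norm (f x) \<le> B"
proof -
  obtain B where B: "\<And>x. x \<in> K \<Longrightarrow> norm (f x) \<le> B"
    using compact_imp_bounded[OF compact_continuous_image[OF continuous_on_subset[OF assms(1,3)] assms(2)]]
    by (auto simp: bounded_iff)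
  show ?thesis by (rule exI[of _ "max B 0"]) (use B in \<open>auto simp: le_max_iff_disj\<close>)
qed

locale harm =
  fixes r :: real and h :: "real^'n::finite \<Rightarrow> real" and Dc :: "real^'n \<Rightarrow> real^'n"
    and D2h :: "real^'n \<Rightarrow> real^'n \<Rightarrow> real^'n"
  assumes h1: "\<And>x. x \<in> ball 0 r \<Longrightarrow> (h has_derivative (\<lambda>v. Dc x \<bullet> v)) (at x)"
    and h2: "\<And>x. x \<in> ball 0 r \<Longrightarrow> (Dc has_derivative D2h x) (at x)"
    and h3: "continuous_on (ball 0 r) (\<lambda>x. \<chi> i j. D2h x (axis j 1) $ i)"
    and h4: "\<And>x. x \<in> ball 0 r \<Longrightarrow> (\<Sum>i\<in>UNIV. D2h x (axis i 1) $ i) = 0"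
begin

lemma Dc_cont: "continuous_on (ball 0 r) Dc"
  by (intro continuous_at_imp_continuous_on ballI has_derivative_continuous[OF h2]) auto

lemma h_cont: "continuous_on (ball 0 r) h"
  by (intro continuous_at_imp_continuous_on ballI has_derivative_continuous[OF h1]) auto

lemma D2_cont: "continuous_on (ball 0 r) (\<lambda>x. D2h x (axis i 1) $ i)"
proof -
  have "continuous_on (ball 0 r) (\<lambda>x. (\<chi> i j. D2h x (axis j 1) $ i) $ i $ i)"
    by (intro continuous_intros h3)
  then show ?thesis by simp
qed

lemma orth_classical:
  assumes tf: "test_fun (ball 0 r) phi dphi"
  shows "integrable lebesgue (\<lambda>x. dphi x \<bullet> Dc x)" "integral\<^sup>L lebesgue (\<lambda>x. dphi x \<bullet> Dc x) = 0"
proof -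
  note F = tf_facts[OF tf]
  define K where "K = supp phi"
  have K: "compact K" "K \<subseteq> ball 0 r" using F K_def by auto
  obtain B1 where B1: "B1 \<ge> 0" "\<And>x. \<bar>phi x\<bar> \<le> B1" using tf_bounds(1)[OF tf] by blast
  obtain B2 where B2: "B2 \<ge> 0" "\<And>x. norm (dphi x) \<le> B2" using tf_bounds(2)[OF tf] by blast
  obtain B3 where B3: "B3 \<ge> 0" "\<And>x. x \<in> K \<Longrightarrow> norm (Dc x) \<le> B3"
    using bound_on_compact[OF Dc_cont K] by blast
  have i_int: "integrable lebesgue (\<lambda>x. dphi x $ i * Dc x $ i + phi x * D2h x (axis i 1) $ i)
      \<and> integral\<^sup>L lebesgue (\<lambda>x. dphi x $ i * Dc x $ i + phi x * D2h x (axis i 1) $ i) = 0" for i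
  proof -
    obtain B4 where B4: "B4 \<ge> 0" "\<And>x. x \<in> K \<Longrightarrow> norm (D2h x (axis i 1) $ i) \<le> B4"
      using bound_on_compact[OF D2_cont K] by blast
    define G where "G x = phi x * Dc x $ i" for x
    define G' where "G' x = dphi x $ i * Dc x $ i + phi x * D2h x (axis i 1) $ i" for x
    have zero: "G' x = 0" "G x = 0" if "x \<notin> K" for x
      using F(6,7) that K_def unfolding G'_def G_def by auto
    have deriv: "((\<lambda>t. G (x + t *\<^sub>R axis i 1)) has_real_derivative G' x) (at 0)" for x
    proof (cases "x \<in> K")
      case True
      then have xb: "x \<in> ball 0 r" using K by auto
      have "((\<lambda>y. Dc y $ i) has_derivative (\<lambda>v. D2h x v $ i)) (at x)"
        by (rule bounded_linear.has_derivative[OF bounded_linear_vec_nth h2[OF xb]])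
      then have "(G has_derivative (\<lambda>v. phi x * D2h x v $ i + (dphi x \<bullet> v) * Dc x $ i)) (at x)"
        unfolding G_def by (rule has_derivative_mult[OF F(1)])
      from dir_deriv[OF this, of "axis i 1"] show ?thesis
        by (simp add: G'_def inner_axis algebra_simps)
    next
      case False
      have op: "open (- K)" using K by (simp add: compact_imp_closed open_Compl)
      have "(G has_derivative (\<lambda>v. 0)) (at x)"
        by (rule deriv_loc0[OF op]) (use False zero in auto)
      from dir_deriv[OF this, of "axis i 1"] show ?thesis using zero False by simp
    qed
    have bnd: "\<bar>G' x\<bar> \<le> B2 * B3 + B1 * B4" for x
    proof (cases "x \<in> K")
      case True
      have a: "\<bar>dphi x $ i\<bar> \<le> B2" using component_le_norm_cart[of "dphi x" i] B2(2)[of x] by linarith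
      have b: "\<bar>Dc x $ i\<bar> \<le> B3" using component_le_norm_cart[of "Dc x" i] B3(2)[OF True] by linarith
      have c: "\<bar>D2h x (axis i 1) $ i\<bar> \<le> B4" using B4(2)[OF True] by simp
      have "\<bar>dphi x $ i * Dc x $ i\<bar> \<le> B2 * B3"
        unfolding abs_mult using a b by (intro mult_mono) auto
      moreover have "\<bar>phi x * D2h x (axis i 1) $ i\<bar> \<le> B1 * B4"
        unfolding abs_mult using B1 c by (intro mult_mono) auto
      ultimately show ?thesis unfolding G'_def by linarith
    next
      case False then show ?thesis using zero B1 B2 B3 B4 by simp
    qed
    have cont: "continuous_on UNIV G"
    proof -
      have "continuous_on (ball 0 r) G" unfolding G_def
        using F(5) Dc_cont by (intro continuous_intros) (auto intro: continuous_on_subset)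
      moreover have "continuous_on (- K) G"
        by (rule continuous_on_eq[OF continuous_on_const[of _ 0]]) (use zero in auto)
      moreover have "ball 0 r \<union> - K = UNIV" using K by auto
      ultimately show ?thesis using continuous_on_open_Un[of "ball 0 r" "-K" G] K
        by (simp add: compact_imp_closed open_Compl)
    qed
    from div_zero[OF deriv bnd cont K(1) zero(2)] show ?thesis unfolding G'_def by simp
  qed
  have eq: "(\<lambda>x. dphi x \<bullet> Dc x) = (\<lambda>x. \<Sum>i\<in>UNIV. dphi x $ i * Dc x $ i + phi x * D2h x (axis i 1) $ i)"
  proof
    fix x
    have "(\<Sum>i\<in>UNIV. dphi x $ i * Dc x $ i + phi x * D2h x (axis i 1) $ i)
        = dphi x \<bullet> Dc x + phi x * (\<Sum>i\<in>UNIV. D2h x (axis i 1) $ i)"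
      by (simp add: sum.distrib sum_distrib_left inner_vec_def)
    also have "\<dots> = dphi x \<bullet> Dc x"
    proof (cases "x \<in> ball 0 r")
      case True then show ?thesis using h4 by simp
    next
      case False then have "x \<notin> supp phi" using F(4) by blast
      then have "phi x = 0" using F(6) by simp
      then show ?thesis by simp
    qed
    finally show "dphi x \<bullet> Dc x = (\<Sum>i\<in>UNIV. dphi x $ i * Dc x $ i + phi x * D2h x (axis i 1) $ i)" by simp
  qed
  show "integrable lebesgue (\<lambda>x. dphi x \<bullet> Dc x)" unfolding eq using i_int by auto
  show "integral\<^sup>L lebesgue (\<lambda>x. dphi x \<bullet> Dc x) = 0" unfolding eq
    using Bochner_Integration.integral_sum[where I=UNIV and M=lebesgue and f="\<lambda>i x. dphi x $ i * Dc x $ i + phi x * D2h x (axis i 1) $ i"] i_int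
    by simp
qed

end



lemma seq_dq:
  fixes f :: "'a::real_normed_vector \<Rightarrow> real"
  assumes d: "((\<lambda>t. f (x + t *\<^sub>R e)) has_real_derivative D) (at 0)"
    and c: "\<And>k. c k \<noteq> 0" "c \<longlonglongrightarrow> 0"
  shows "(\<lambda>k. (f (x + c k *\<^sub>R e) - f x) / c k) \<longlonglongrightarrow> D"
proof -
  have "(\<lambda>h. (f (x + (0 + h) *\<^sub>R e) - f (x + 0 *\<^sub>R e)) / h) \<midarrow>0\<rightarrow> D"
    using d unfolding DERIV_def by simp
  then have "(\<lambda>h. (f (x + h *\<^sub>R e) - f x) / h) \<midarrow>0\<rightarrow> D" by simp
  then have "\<forall>S. (\<forall>n. S n \<noteq> 0) \<and> S \<longlonglongrightarrow> 0 \<longrightarrow> (\<lambda>n. (f (x + S n *\<^sub>R e) - f x) / S n) \<longlonglongrightarrow> D"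
    using LIMSEQ_SEQ_conv[of 0 "\<lambda>h. (f (x + h *\<^sub>R e) - f x) / h" D] by simp
  then have "(\<forall>n. c n \<noteq> 0) \<and> c \<longlonglongrightarrow> 0 \<longrightarrow> (\<lambda>n. (f (x + c n *\<^sub>R e) - f x) / c n) \<longlonglongrightarrow> D"
    by (rule spec)
  then show ?thesis using c by simp
qed

lemma dq_bound:
  fixes f f' :: "'a::real_normed_vector \<Rightarrow> real"
  assumes c: "c \<noteq> 0"
    and d: "\<And>t. min 0 c \<le> t \<Longrightarrow> t \<le> max 0 c \<Longrightarrow>
              ((\<lambda>s. f ((x + t *\<^sub>R e) + s *\<^sub>R e)) has_real_derivative f' (x + t *\<^sub>R e)) (at 0)"
    and b: "\<And>t. min 0 c \<le> t \<Longrightarrow> t \<le> max 0 c \<Longrightarrow> \<bar>f' (x + t *\<^sub>R e)\<bar> \<le> B"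
  shows "\<bar>(f (x + c *\<^sub>R e) - f x) / c\<bar> \<le> B"
proof -
  have der: "DERIV (\<lambda>t. f (x + t *\<^sub>R e)) t :> f' (x + t *\<^sub>R e)"
    if "min 0 c \<le> t" "t \<le> max 0 c" for t
  proof -
    have "((\<lambda>s. f (x + (s + t) *\<^sub>R e)) has_real_derivative f' (x + t *\<^sub>R e)) (at 0)"
      using d[OF that] by (simp add: algebra_simps)
    then show ?thesis using DERIV_shift[of "\<lambda>t. f (x + t *\<^sub>R e)" "f' (x + t *\<^sub>R e)" 0 t] by simp
  qed
  show ?thesis
  proof (cases "c > 0")
    case True
    have "\<exists>z. 0 < z \<and> z < c \<and> f (x + c *\<^sub>R e) - f (x + 0 *\<^sub>R e) = (c - 0) * f' (x + z *\<^sub>R e)"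
      by (rule MVT2[of 0 c "\<lambda>t. f (x + t *\<^sub>R e)" "\<lambda>t. f' (x + t *\<^sub>R e)"]) (use True der in auto)
    then obtain z where z: "0 < z" "z < c" "f (x + c *\<^sub>R e) - f x = c * f' (x + z *\<^sub>R e)" by auto
    then have "(f (x + c *\<^sub>R e) - f x) / c = f' (x + z *\<^sub>R e)" using c by simp
    then show ?thesis using b[of z] z True by simp
  next
    case False
    then have cn: "c < 0" using c by simp
    have "\<exists>z. c < z \<and> z < 0 \<and> f (x + 0 *\<^sub>R e) - f (x + c *\<^sub>R e) = (0 - c) * f' (x + z *\<^sub>R e)"
      by (rule MVT2[of c 0 "\<lambda>t. f (x + t *\<^sub>R e)" "\<lambda>t. f' (x + t *\<^sub>R e)"]) (use cn der in auto)
    then obtain z where z: "c < z" "z < 0" "f x - f (x + c *\<^sub>R e) = (- c) * f' (x + z *\<^sub>R e)" by auto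
    then have "(f (x + c *\<^sub>R e) - f x) / c = f' (x + z *\<^sub>R e)" using c by (simp add: field_simps)
    then show ?thesis using b[of z] z cn by simp
  qed
qed

lemma const_int_on:
  assumes "S \<in> lmeasurable"
  shows "integrable (lebesgue_on S) (\<lambda>x. c::real)"
proof -
  have "integrable lebesgue (\<lambda>x. c * indicator S x)"
    using assms by (auto simp: fmeasurable_def)
  then show ?thesis using assms
    by (subst integrable_restrict_space) (auto simp: fmeasurable_def mult.commute)
qed

lemma L2_L1:
  assumes S: "S \<in> lmeasurable" and m: "f \<in> borel_measurable (lebesgue_on S)"
    and i: "integrable (lebesgue_on S) (\<lambda>x. (f x)\<^sup>2)"
  shows "integrable (lebesgue_on S) (f :: _ \<Rightarrow> real)"
proof -
  have ib: "integrable (lebesgue_on S) (\<lambda>x. 1 + (f x)\<^sup>2)" using const_int_on[OF S] i by auto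
  have nb: "norm (f x) \<le> norm (1 + (f x)\<^sup>2)" for x
  proof -
    have "\<bar>f x\<bar> \<le> 1 + (f x)\<^sup>2"
    proof (cases "\<bar>f x\<bar> \<le> 1")
      case True then show ?thesis by (smt (verit) zero_le_power2)
    next
      case False
      have "1 * \<bar>f x\<bar> \<le> \<bar>f x\<bar> * \<bar>f x\<bar>" by (rule mult_right_mono) (use False in auto)
      then have "\<bar>f x\<bar> \<le> f x * f x" by simp
      then show ?thesis by (simp add: power2_eq_square)
    qed
    then show ?thesis by simp
  qed
  have "AE x in lebesgue_on S. norm (f x) \<le> norm (1 + (f x)\<^sup>2)" by (rule AE_I2) (rule nb)
  then show ?thesis by (rule Bochner_Integration.integrable_bound[OF ib m])
qed

lemma int_bdd_mult:
  fixes f g :: "'a \<Rightarrow> real"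
  assumes i: "integrable M f" and m: "g \<in> borel_measurable M" and b: "\<And>x. \<bar>g x\<bar> \<le> B"
  shows "integrable M (\<lambda>x. f x * g x)"
proof -
  have ib: "integrable M (\<lambda>x. B * f x)" using i by auto
  have mm: "(\<lambda>x. f x * g x) \<in> borel_measurable M" using i m by measurable
  have nb: "norm (f x * g x) \<le> norm (B * f x)" for x
  proof -
    have "\<bar>g x\<bar> * \<bar>f x\<bar> \<le> \<bar>B\<bar> * \<bar>f x\<bar>" using b[of x] by (intro mult_right_mono) auto
    then show ?thesis by (simp add: abs_mult mult.commute)
  qed
  have "AE x in M. norm (f x * g x) \<le> norm (B * f x)" by (rule AE_I2) (rule nb)
  then show ?thesis by (rule Bochner_Integration.integrable_bound[OF ib mm])
qed

lemma cont_meas_on: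
  fixes g :: "'a::euclidean_space \<Rightarrow> 'b::euclidean_space"
  shows "continuous_on UNIV g \<Longrightarrow> g \<in> borel_measurable (lebesgue_on S)"
  by (rule measurable_restrict_space1[OF cont_meas_leb])



lemma meas_nth:
  fixes f :: "'a \<Rightarrow> real^'n::finite"
  assumes "f \<in> borel_measurable M"
  shows "(\<lambda>x. f x $ j) \<in> borel_measurable M"
proof -
  have "(\<lambda>v::real^'n. v $ j) \<in> borel_measurable borel"
    by (intro borel_measurable_continuous_onI continuous_intros)
  then show ?thesis by (rule measurable_compose[OF assms])
qed

context harm begin

lemma weak_comp:
  assumes H: "H1 (ball 0 r) h Dw" and tf: "test_fun (ball 0 r) phi dphi"
  shows "integrable (lebesgue_on (ball 0 r)) (\<lambda>x. dphi x $ i * Dw x $ i)"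
    and "integral\<^sup>L (lebesgue_on (ball 0 r)) (\<lambda>x. dphi x $ i * Dw x $ i)
         = integral\<^sup>L lebesgue (\<lambda>x. Dc x $ i * dphi x $ i)"
    and "integrable lebesgue (\<lambda>x. Dc x $ i * dphi x $ i)"
proof -
  let ?\<Omega> = "lebesgue_on (ball (0::real^'n) r)"
  note F = tf_facts[OF tf]
  define K where "K = supp phi"
  have K: "compact K" "K \<subseteq> ball 0 r" using F K_def by auto
  have Bl: "ball (0::real^'n) r \<in> lmeasurable" by simp
  have Bs: "ball (0::real^'n) r \<in> sets lebesgue" by simp
  have hm: "h \<in> borel_measurable ?\<Omega>" and Dwm: "Dw \<in> borel_measurable ?\<Omega>"
    and h2: "integrable ?\<Omega> (\<lambda>x. (h x)\<^sup>2)" and Dw2: "integrable ?\<Omega> (\<lambda>x. (norm (Dw x))\<^sup>2)"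
    and wg: "weak_grad (ball 0 r) h Dw"
    using H unfolding H1_def by auto
  have hint: "integrable ?\<Omega> h" by (rule L2_L1[OF Bl hm h2])
  have nDwm: "(\<lambda>x. norm (Dw x)) \<in> borel_measurable ?\<Omega>" using Dwm by measurable
  have nDwi: "integrable ?\<Omega> (\<lambda>x. norm (Dw x))" by (rule L2_L1[OF Bl nDwm]) (use Dw2 in simp)
  have Dwjm: "(\<lambda>x. Dw x $ j) \<in> borel_measurable ?\<Omega>" for j
  proof -
    have "(\<lambda>v::real^'n. v $ j) \<in> borel_measurable borel"
      by (intro borel_measurable_continuous_onI continuous_intros)
    then show ?thesis by (rule measurable_compose[OF Dwm])
  qed
  have Dwj: "integrable ?\<Omega> (\<lambda>x. Dw x $ j)" for j
  proof -
    have "AE x in ?\<Omega>. norm (Dw x $ j) \<le> norm (norm (Dw x))"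
      by (rule AE_I2) (simp add: component_le_norm_cart)
    then show ?thesis by (rule Bochner_Integration.integrable_bound[OF nDwi Dwjm])
  qed
  obtain B1 where B1: "B1 \<ge> 0" "\<And>x. \<bar>phi x\<bar> \<le> B1" using tf_bounds(1)[OF tf] by blast
  obtain B2 where B2: "B2 \<ge> 0" "\<And>x. norm (dphi x) \<le> B2" using tf_bounds(2)[OF tf] by blast
  have B2i: "\<bar>dphi x $ j\<bar> \<le> B2" for x j using component_le_norm_cart[of "dphi x" j] B2(2)[of x] by linarith
  obtain d0 where d0: "d0 > 0" "(\<Union>x\<in>K. cball x d0) \<subseteq> ball 0 r"
    using compact_subset_open_imp_cball_epsilon_subset[OF K(1) open_ball K(2)] by blast
  define e :: "real^'n" where "e = axis i 1"
  have ne: "norm e = 1" by (simp add: e_def)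
  define eps where "eps k = d0 * inverse (real (Suc (Suc k)))" for k
  have eps: "0 < eps k" "eps k < d0" for k
  proof -
    have a: "0 < inverse (real (Suc (Suc k)))" "inverse (real (Suc (Suc k))) < 1"
      by (auto simp: inverse_less_1_iff)
    show "0 < eps k" using a d0 by (simp add: eps_def)
    have "d0 * inverse (real (Suc (Suc k))) < d0 * 1" by (rule mult_strict_left_mono[OF a(2) d0(1)])
    then show "eps k < d0" by (simp add: eps_def)
  qed
  have epslim: "eps \<longlonglongrightarrow> 0"
  proof -
    have "(\<lambda>k. inverse (real (Suc (Suc k)))) \<longlonglongrightarrow> 0"
      by (rule LIMSEQ_Suc[OF LIMSEQ_inverse_real_of_nat])
    then show ?thesis unfolding eps_def by (rule tendsto_mult_right_zero)
  qed
  have inK: "y + t *\<^sub>R e \<in> ball 0 r" if "y \<in> K" "\<bar>t\<bar> \<le> d0" for y t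
  proof -
    have "dist y (y + t *\<^sub>R e) \<le> d0" using that ne by (simp add: dist_norm)
    then have "y + t *\<^sub>R e \<in> cball y d0" by (simp add: dist_commute)
    then show ?thesis using d0(2) that(1) by blast
  qed
  define psi where "psi k x = (phi (x + eps k *\<^sub>R e) - phi x) / eps k" for k x
  define dpsi where "dpsi k x = (1 / eps k) *\<^sub>R (dphi (x + eps k *\<^sub>R e) - dphi x)" for k x
  have tfk: "test_fun (ball 0 r) (psi k) (dpsi k)" for k
  proof -
    let ?c = "eps k *\<^sub>R e"
    have der: "(psi k has_derivative (\<lambda>v. dpsi k x \<bullet> v)) (at x)" for x
    proof -
      have "((\<lambda>x. x + ?c) has_derivative (\<lambda>v. v)) (at x)" by (auto intro!: derivative_eq_intros)
      then have d1: "((\<lambda>x. phi (x + ?c)) has_derivative (\<lambda>v. dphi (x + ?c) \<bullet> v)) (at x)"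
        using has_derivative_compose[of "\<lambda>x. x + ?c" "\<lambda>v. v" x UNIV phi] F(1) by simp
      have "(psi k has_derivative (\<lambda>v. (dphi (x + ?c) \<bullet> v - dphi x \<bullet> v) / eps k)) (at x)"
        unfolding psi_def by (intro derivative_eq_intros) (use d1 F(1) eps[of k] in auto)
      moreover have "(\<lambda>v. (dphi (x + ?c) \<bullet> v - dphi x \<bullet> v) / eps k) = (\<lambda>v. dpsi k x \<bullet> v)"
        by (auto simp: dpsi_def inner_diff_left divide_inverse mult.commute)
      ultimately show ?thesis by simp
    qed
    have cont: "continuous_on UNIV (dpsi k)"
    proof -
      have "continuous_on UNIV (\<lambda>x. dphi (x + ?c))"
        by (rule continuous_on_compose2[OF F(2)]) (auto intro!: continuous_intros)
      then show ?thesis unfolding dpsi_def using F(2) by (intro continuous_intros) auto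
    qed
    define Kk where "Kk = K \<union> (\<lambda>x. x - ?c) ` K"
    have Kk: "compact Kk" unfolding Kk_def
      by (intro compact_Un K(1) compact_continuous_image) (auto intro!: continuous_intros)
    have KkB: "Kk \<subseteq> ball 0 r"
    proof
      fix x assume "x \<in> Kk"
      then consider "x \<in> K" | y where "y \<in> K" "x = y - ?c" unfolding Kk_def by blast
      then show "x \<in> ball 0 r"
      proof cases
        case 1 then show ?thesis using K by auto
      next
        case 2
        have "y + (- eps k) *\<^sub>R e \<in> ball 0 r" by (rule inK[OF 2(1)]) (use eps[of k] in simp)
        then show ?thesis using 2 by simp
      qed
    qed
    have sub: "{x. psi k x \<noteq> 0} \<subseteq> Kk"
    proof
      fix x assume "x \<in> {x. psi k x \<noteq> 0}"
      then have "phi (x + ?c) \<noteq> 0 \<or> phi x \<noteq> 0" unfolding psi_def by auto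
      then have "x + ?c \<in> K \<or> x \<in> K" using F(6) K_def by auto
      then show "x \<in> Kk"
      proof
        assume "x + ?c \<in> K"
        then have "(x + ?c) - ?c \<in> (\<lambda>x. x - ?c) ` K" by (rule imageI)
        then show ?thesis unfolding Kk_def by simp
      qed (simp add: Kk_def)
    qed
    have cl: "closure {x. psi k x \<noteq> 0} \<subseteq> Kk"
      by (rule closure_minimal[OF sub compact_imp_closed[OF Kk]])
    have ccl: "compact (closure {x. psi k x \<noteq> 0})"
      unfolding compact_closure by (rule bounded_subset[OF compact_imp_bounded[OF Kk] sub])
    show ?thesis unfolding test_fun_def using der cont cl ccl KkB by auto
  qed
  have eqk: "integral\<^sup>L ?\<Omega> (\<lambda>x. h x * dpsi k x $ i) = - integral\<^sup>L ?\<Omega> (\<lambda>x. psi k x * Dw x $ i)" for k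
  proof -
    obtain C1 where C1: "C1 \<ge> 0" "\<And>x. \<bar>psi k x\<bar> \<le> C1" using tf_bounds(1)[OF tfk] by blast
    obtain C2 where C2: "C2 \<ge> 0" "\<And>x. norm (dpsi k x) \<le> C2" using tf_bounds(2)[OF tfk] by blast
    note Fk = tf_facts[OF tfk[of k]]
    have i1: "integrable ?\<Omega> (\<lambda>x. h x *\<^sub>R dpsi k x)"
      unfolding integrable_iff_component[OF Bs]
    proof
      fix j
      have "integrable ?\<Omega> (\<lambda>x. h x * dpsi k x $ j)"
      proof (rule int_bdd_mult[OF hint])
        show "(\<lambda>x. dpsi k x $ j) \<in> borel_measurable ?\<Omega>"
          by (rule meas_nth[OF cont_meas_on[OF Fk(2)]])
        show "\<bar>dpsi k x $ j\<bar> \<le> C2" for x using component_le_norm_cart[of "dpsi k x" j] C2(2)[of x] by linarith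
      qed
      then show "integrable ?\<Omega> (\<lambda>x. (h x *\<^sub>R dpsi k x) $ j)" by simp
    qed
    have i2: "integrable ?\<Omega> (\<lambda>x. psi k x *\<^sub>R Dw x)"
      unfolding integrable_iff_component[OF Bs]
    proof
      fix j
      have "integrable ?\<Omega> (\<lambda>x. Dw x $ j * psi k x)"
        by (rule int_bdd_mult[OF Dwj cont_meas_on[OF Fk(5)] C1(2)])
      then show "integrable ?\<Omega> (\<lambda>x. (psi k x *\<^sub>R Dw x) $ j)" by (simp add: mult.commute)
    qed
    have w: "integral\<^sup>L ?\<Omega> (\<lambda>x. h x *\<^sub>R dpsi k x) = - integral\<^sup>L ?\<Omega> (\<lambda>x. psi k x *\<^sub>R Dw x)"
      using wg tfk[of k] unfolding weak_grad_def by blast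
    have "integral\<^sup>L ?\<Omega> (\<lambda>x. h x * dpsi k x $ i) = (integral\<^sup>L ?\<Omega> (\<lambda>x. h x *\<^sub>R dpsi k x)) $ i"
      using integral_bounded_linear[OF bounded_linear_vec_nth i1, of i] by simp
    also have "\<dots> = - (integral\<^sup>L ?\<Omega> (\<lambda>x. psi k x *\<^sub>R Dw x)) $ i" using w by simp
    also have "\<dots> = - integral\<^sup>L ?\<Omega> (\<lambda>x. psi k x * Dw x $ i)"
      using integral_bounded_linear[OF bounded_linear_vec_nth i2, of i] by simp
    finally show ?thesis .
  qed
  have phider: "((\<lambda>t. phi (x + t *\<^sub>R e)) has_real_derivative dphi x $ i) (at 0)" for x
    using dir_deriv[OF F(1)[of x], of e] by (simp add: e_def inner_axis)
  have psilim: "(\<lambda>k. psi k x) \<longlonglongrightarrow> dphi x $ i" for x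
    unfolding psi_def by (rule seq_dq[OF phider]) (use eps epslim in \<open>auto simp: less_imp_neq[symmetric]\<close>)
  have psib: "\<bar>psi k x\<bar> \<le> B2" for k x
    unfolding psi_def
    by (rule dq_bound[where f'="\<lambda>y. dphi y $ i"]) (use eps[of k] phider B2i in auto)
  have R: "(\<lambda>k. integral\<^sup>L ?\<Omega> (\<lambda>x. psi k x * Dw x $ i)) \<longlonglongrightarrow> integral\<^sup>L ?\<Omega> (\<lambda>x. dphi x $ i * Dw x $ i)"
   and Ri: "integrable ?\<Omega> (\<lambda>x. dphi x $ i * Dw x $ i)"
  proof -
    have m: "(\<lambda>x. dphi x $ i * Dw x $ i) \<in> borel_measurable ?\<Omega>"
      using meas_nth[OF cont_meas_on[OF F(2)]] Dwjm by measurable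
    have sm: "(\<lambda>x. psi k x * Dw x $ i) \<in> borel_measurable ?\<Omega>" for k
      using cont_meas_on[OF tf_facts(5)[OF tfk[of k]]] Dwjm by measurable
    have wi: "integrable ?\<Omega> (\<lambda>x. B2 * \<bar>Dw x $ i\<bar>)" using Dwj by auto
    have lim: "AE x in ?\<Omega>. (\<lambda>k. psi k x * Dw x $ i) \<longlonglongrightarrow> dphi x $ i * Dw x $ i"
      by (rule AE_I2) (intro tendsto_mult psilim tendsto_const)
    have bd: "AE x in ?\<Omega>. norm (psi k x * Dw x $ i) \<le> B2 * \<bar>Dw x $ i\<bar>" for k
    proof (rule AE_I2)
      fix x
      have "\<bar>psi k x\<bar> * \<bar>Dw x $ i\<bar> \<le> B2 * \<bar>Dw x $ i\<bar>" by (rule mult_right_mono[OF psib]) simp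
      then show "norm (psi k x * Dw x $ i) \<le> B2 * \<bar>Dw x $ i\<bar>" by (simp add: abs_mult)
    qed
    show "(\<lambda>k. integral\<^sup>L ?\<Omega> (\<lambda>x. psi k x * Dw x $ i)) \<longlonglongrightarrow> integral\<^sup>L ?\<Omega> (\<lambda>x. dphi x $ i * Dw x $ i)"
      by (rule integral_dominated_convergence[where s="\<lambda>k x. psi k x * Dw x $ i", OF m sm wi lim bd])
    show "integrable ?\<Omega> (\<lambda>x. dphi x $ i * Dw x $ i)"
      by (rule integrable_dominated_convergence[where s="\<lambda>k x. psi k x * Dw x $ i", OF m sm wi lim bd])
  qed
  show "integrable ?\<Omega> (\<lambda>x. dphi x $ i * Dw x $ i)" by (rule Ri)
  define hb where "hb x = (if x \<in> ball 0 r then h x else 0)" for x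
  have hbm: "hb \<in> borel_measurable lebesgue"
    unfolding hb_def[abs_def] by (rule borel_measurable_if_I[OF hm Bs])
  have hbz: "hb x = 0" if "x \<notin> ball 0 r" for x using that by (simp add: hb_def)
  have dphim: "(\<lambda>x. dphi x $ i) \<in> borel_measurable lebesgue" by (rule meas_nth[OF cont_meas_leb[OF F(2)]])
  have Lk: "integral\<^sup>L ?\<Omega> (\<lambda>x. h x * dpsi k x $ i)
      = integral\<^sup>L lebesgue (\<lambda>y. (hb (y - eps k *\<^sub>R e) - hb y) / eps k * dphi y $ i)" for k
  proof -
    let ?c = "eps k *\<^sub>R e"
    have a: "integral\<^sup>L ?\<Omega> (\<lambda>x. h x * dpsi k x $ i) = integral\<^sup>L ?\<Omega> (\<lambda>x. hb x * dpsi k x $ i)"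
      by (rule Bochner_Integration.integral_cong) (auto simp: hb_def)
    have b: "integral\<^sup>L ?\<Omega> (\<lambda>x. hb x * dpsi k x $ i) = integral\<^sup>L lebesgue (\<lambda>x. hb x * dpsi k x $ i)"
      by (rule on_set_integral(1)[OF Bs]) (simp add: hbz)
    have ex: "(\<lambda>x. hb x * dpsi k x $ i) = (\<lambda>x. (hb x * dphi (?c + x) $ i - hb x * dphi x $ i) / eps k)"
      by (rule ext) (simp add: dpsi_def add.commute diff_divide_distrib right_diff_distrib)
    have int_trans: "integrable lebesgue (\<lambda>x. hb x * dphi (a + x) $ i)" for a
    proof -
      have m: "(\<lambda>x. dphi (a + x) $ i) \<in> borel_measurable ?\<Omega>"
        by (rule meas_nth[OF cont_meas_on]) (rule continuous_on_compose2[OF F(2)], auto intro!: continuous_intros)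
      have "integrable ?\<Omega> (\<lambda>x. h x * dphi (a + x) $ i)"
        by (rule int_bdd_mult[OF hint m B2i])
      then have "integrable ?\<Omega> (\<lambda>x. hb x * dphi (a + x) $ i)"
        by (subst Bochner_Integration.integrable_cong[OF refl]) (auto simp: hb_def)
      then show ?thesis by (subst (asm) on_set_integral(2)[OF Bs]) (auto simp: hbz)
    qed
    define f where "f y = hb (-?c + y) * dphi y $ i" for y
    have fm: "f \<in> borel_measurable lebesgue"
      unfolding f_def[abs_def] using lebesgue_transl(3)[OF hbm, of "-?c"] dphim by measurable
    have i1: "integrable lebesgue (\<lambda>x. f (?c + x))" unfolding f_def using int_trans[of ?c] by simp
    have fi: "integrable lebesgue f" using i1 lebesgue_transl(2)[OF fm] by simp
    have tr: "integral\<^sup>L lebesgue (\<lambda>x. hb x * dphi (?c + x) $ i) = integral\<^sup>L lebesgue f"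
      using lebesgue_transl(1)[OF fm, of ?c] unfolding f_def by simp
    have i0: "integrable lebesgue (\<lambda>x. hb x * dphi x $ i)" using int_trans[of 0] by simp
    have "integral\<^sup>L lebesgue (\<lambda>x. hb x * dpsi k x $ i)
        = (integral\<^sup>L lebesgue (\<lambda>x. hb x * dphi (?c + x) $ i) - integral\<^sup>L lebesgue (\<lambda>x. hb x * dphi x $ i)) / eps k"
      unfolding ex using int_trans[of ?c] i0 by simp
    also have "\<dots> = (integral\<^sup>L lebesgue f - integral\<^sup>L lebesgue (\<lambda>x. hb x * dphi x $ i)) / eps k"
      using tr by simp
    also have "\<dots> = integral\<^sup>L lebesgue (\<lambda>y. (f y - hb y * dphi y $ i) / eps k)"
      using fi i0 by simp
    also have "\<dots> = integral\<^sup>L lebesgue (\<lambda>y. (hb (y - ?c) - hb y) / eps k * dphi y $ i)"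
      unfolding f_def by (rule Bochner_Integration.integral_cong) (auto simp: field_simps)
    finally show ?thesis using a b by simp
  qed
  define q where "q k y = (hb (y - eps k *\<^sub>R e) - hb y) / eps k * dphi y $ i" for k y
  have hbder: "((\<lambda>t. hb (y + t *\<^sub>R e)) has_real_derivative Dc y $ i) (at 0)" if "y \<in> ball 0 r" for y
  proof -
    have "(hb has_derivative (\<lambda>v. Dc y \<bullet> v)) (at y)"
      by (rule has_derivative_transform_within_open[OF h1[OF that] open_ball that]) (simp add: hb_def)
    from dir_deriv[OF this, of e] show ?thesis by (simp add: e_def inner_axis)
  qed
  have qlim: "(\<lambda>k. q k y) \<longlonglongrightarrow> - Dc y $ i * dphi y $ i" for y
  proof (cases "y \<in> K")
    case True
    have yb: "y \<in> ball 0 r" using True K by auto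
    have "(\<lambda>k. (hb (y + (- eps k) *\<^sub>R e) - hb y) / (- eps k)) \<longlonglongrightarrow> Dc y $ i"
      by (rule seq_dq[OF hbder[OF yb]]) (use eps epslim in \<open>auto intro: tendsto_minus_cancel simp: less_imp_neq[symmetric]\<close>)
    then have "(\<lambda>k. - ((hb (y + (- eps k) *\<^sub>R e) - hb y) / (- eps k)) * dphi y $ i) \<longlonglongrightarrow> - Dc y $ i * dphi y $ i"
      by (intro tendsto_mult tendsto_minus tendsto_const)
    moreover have "- ((hb (y + (- eps k) *\<^sub>R e) - hb y) / (- eps k)) * dphi y $ i = q k y" for k
      unfolding q_def using eps[of k] by (simp add: field_simps)
    ultimately show ?thesis by simp
  next
    case False
    then have "dphi y = 0" using F(7) K_def by simp
    then show ?thesis unfolding q_def by simp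
  qed
  define K2 where "K2 = (\<lambda>p. fst p + snd p *\<^sub>R e) ` (K \<times> {-d0..0})"
  have K2: "compact K2" unfolding K2_def
    by (intro compact_continuous_image compact_Times K(1) compact_Icc continuous_intros)
  have K2B: "K2 \<subseteq> ball 0 r"
  proof
    fix z assume "z \<in> K2"
    then obtain y t where "y \<in> K" "t \<in> {-d0..0}" "z = y + t *\<^sub>R e" unfolding K2_def by auto
    then show "z \<in> ball 0 r" using inK[of y t] by simp
  qed
  obtain B3 where B3: "B3 \<ge> 0" "\<And>z. z \<in> K2 \<Longrightarrow> norm (Dc z) \<le> B3"
    using bound_on_compact[OF Dc_cont K2 K2B] by blast
  have qb: "\<bar>q k y\<bar> \<le> B3 * B2 * indicator K y" for k y
  proof (cases "y \<in> K")
    case True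
    have Ab: "\<bar>(hb (y + (- eps k) *\<^sub>R e) - hb y) / (- eps k)\<bar> \<le> B3"
    proof (rule dq_bound[where f'="\<lambda>z. Dc z $ i"])
      show "- eps k \<noteq> 0" using eps[of k] by simp
      fix t assume t: "min 0 (- eps k) \<le> t" "t \<le> max 0 (- eps k)"
      then have t': "t \<in> {-d0..0}" using eps[of k] by auto
      have mem: "y + t *\<^sub>R e \<in> K2" unfolding K2_def
        by (rule image_eqI[where x="(y, t)"]) (use True t' in auto)
      show "((\<lambda>s. hb (y + t *\<^sub>R e + s *\<^sub>R e)) has_real_derivative Dc (y + t *\<^sub>R e) $ i) (at 0)"
        by (rule hbder) (use mem K2B in auto)
      show "\<bar>Dc (y + t *\<^sub>R e) $ i\<bar> \<le> B3"
        using component_le_norm_cart[of "Dc (y + t *\<^sub>R e)" i] B3(2)[OF mem] by linarith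
    qed
    have qe: "q k y = ((hb (y + (- eps k) *\<^sub>R e) - hb y) / (- eps k)) * (- dphi y $ i)"
      unfolding q_def using eps[of k] by (simp add: field_simps)
    have "\<bar>q k y\<bar> = \<bar>(hb (y + (- eps k) *\<^sub>R e) - hb y) / (- eps k)\<bar> * \<bar>dphi y $ i\<bar>"
      by (simp only: qe abs_mult abs_minus_cancel)
    also have "\<dots> \<le> B3 * B2" by (rule mult_mono[OF Ab B2i]) (use B3 in auto)
    finally have "\<bar>q k y\<bar> \<le> B3 * B2" .
    then show ?thesis using True by simp
  next
    case False
    then have "dphi y = 0" using F(7) K_def by simp
    then show ?thesis unfolding q_def using B2 B3 by simp
  qed
  have qm: "q k \<in> borel_measurable lebesgue" for k
    unfolding q_def[abs_def] using lebesgue_transl(3)[OF hbm, of "- eps k *\<^sub>R e"] hbm dphim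
    by (simp add: add.commute) measurable
  have limm: "(\<lambda>y. - Dc y $ i * dphi y $ i) \<in> borel_measurable lebesgue"
    by (rule borel_measurable_LIMSEQ_real[OF qlim qm])
  have Kf: "K \<in> sets lebesgue" "emeasure lebesgue K < \<infinity>"
    using fmeasurable_compact[OF K(1)] by (auto simp: fmeasurable_def)
  have wint: "integrable lebesgue (\<lambda>y. B3 * B2 * indicator K y)" using Kf by auto
  have qbd: "AE y in lebesgue. norm (q k y) \<le> B3 * B2 * indicator K y" for k
    by (rule AE_I2) (simp add: qb)
  have L: "(\<lambda>k. integral\<^sup>L lebesgue (q k)) \<longlonglongrightarrow> integral\<^sup>L lebesgue (\<lambda>y. - Dc y $ i * dphi y $ i)"
    by (rule integral_dominated_convergence[where s=q, OF limm qm wint]) (use qlim qbd in auto)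
  have "integrable lebesgue (\<lambda>y. - Dc y $ i * dphi y $ i)"
    by (rule integrable_dominated_convergence[where s=q, OF limm qm wint]) (use qlim qbd in auto)
  from integrable_minus[OF this] show "integrable lebesgue (\<lambda>x. Dc x $ i * dphi x $ i)" by simp
  have "(\<lambda>k. - integral\<^sup>L ?\<Omega> (\<lambda>x. psi k x * Dw x $ i)) \<longlonglongrightarrow> integral\<^sup>L lebesgue (\<lambda>y. - Dc y $ i * dphi y $ i)"
    using L eqk Lk unfolding q_def by simp
  moreover have "(\<lambda>k. - integral\<^sup>L ?\<Omega> (\<lambda>x. psi k x * Dw x $ i)) \<longlonglongrightarrow> - integral\<^sup>L ?\<Omega> (\<lambda>x. dphi x $ i * Dw x $ i)"
    by (rule tendsto_minus[OF R])
  ultimately have "integral\<^sup>L lebesgue (\<lambda>y. - Dc y $ i * dphi y $ i) = - integral\<^sup>L ?\<Omega> (\<lambda>x. dphi x $ i * Dw x $ i)"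
    by (rule LIMSEQ_unique)
  then show "integral\<^sup>L ?\<Omega> (\<lambda>x. dphi x $ i * Dw x $ i) = integral\<^sup>L lebesgue (\<lambda>x. Dc x $ i * dphi x $ i)"
    by simp
qed

end



context harm begin

lemma weak_orth_tf:
  assumes H: "H1 (ball 0 r) h Dw" and tf: "test_fun (ball 0 r) phi dphi"
  shows "integrable (lebesgue_on (ball 0 r)) (\<lambda>x. Dw x \<bullet> dphi x)"
    and "integral\<^sup>L (lebesgue_on (ball 0 r)) (\<lambda>x. Dw x \<bullet> dphi x) = 0"
proof -
  let ?\<Omega> = "lebesgue_on (ball (0::real^'n) r)"
  have eq: "(\<lambda>x. Dw x \<bullet> dphi x) = (\<lambda>x. \<Sum>i\<in>UNIV. dphi x $ i * Dw x $ i)"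
    by (auto simp: inner_vec_def mult.commute)
  note W = weak_comp[OF H tf]
  show "integrable ?\<Omega> (\<lambda>x. Dw x \<bullet> dphi x)" unfolding eq using W(1) by auto
  have "integral\<^sup>L ?\<Omega> (\<lambda>x. Dw x \<bullet> dphi x) = (\<Sum>i\<in>UNIV. integral\<^sup>L ?\<Omega> (\<lambda>x. dphi x $ i * Dw x $ i))"
    unfolding eq
    using Bochner_Integration.integral_sum[where I=UNIV and M="?\<Omega>" and f="\<lambda>i x. dphi x $ i * Dw x $ i"] W(1)
    by simp
  also have "\<dots> = (\<Sum>i\<in>UNIV. integral\<^sup>L lebesgue (\<lambda>x. Dc x $ i * dphi x $ i))" using W(2) by simp
  also have "\<dots> = integral\<^sup>L lebesgue (\<lambda>x. \<Sum>i\<in>UNIV. Dc x $ i * dphi x $ i)"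
    using Bochner_Integration.integral_sum[where I=UNIV and M=lebesgue and f="\<lambda>i x. Dc x $ i * dphi x $ i"] W(3)
    by simp
  also have "\<dots> = integral\<^sup>L lebesgue (\<lambda>x. dphi x \<bullet> Dc x)"
    by (simp add: inner_vec_def mult.commute)
  also have "\<dots> = 0" by (rule orth_classical(2)[OF tf])
  finally show "integral\<^sup>L ?\<Omega> (\<lambda>x. Dw x \<bullet> dphi x) = 0" .
qed

end



lemma lim_le:
  fixes a :: "nat \<Rightarrow> real"
  assumes a: "a \<longlonglongrightarrow> 0" and b: "\<And>k. X \<le> \<alpha> + \<beta> * a k"
  shows "X \<le> \<alpha>"
proof -
  have "(\<lambda>k. \<alpha> + \<beta> * a k) \<longlonglongrightarrow> \<alpha> + \<beta> * 0" by (intro tendsto_intros a)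
  then have "X \<le> \<alpha> + \<beta> * 0" by (rule LIMSEQ_le_const) (use b in auto)
  then show ?thesis by simp
qed

lemma eps_le:
  fixes X Y Z :: real
  assumes "\<And>e. 0 < e \<Longrightarrow> X \<le> Y + e * Z"
  shows "X \<le> Y"
proof (rule field_le_epsilon)
  fix e :: real assume e: "0 < e"
  define d where "d = e / (\<bar>Z\<bar> + 1)"
  have d: "0 < d" using e by (simp add: d_def)
  have "d * Z \<le> d * \<bar>Z\<bar>" using d by (simp add: mult_left_mono)
  also have "\<dots> \<le> e" unfolding d_def using e by (simp add: field_simps)
  finally show "X \<le> Y + e" using assms[OF d] by linarith
qed

lemma sq_split:
  fixes x y e :: real
  assumes e: "0 < e"
  shows "(x + y)\<^sup>2 \<le> (1 + e) * x\<^sup>2 + (1 + 1 / e) * y\<^sup>2"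
proof -
  have "0 \<le> (e * x - y)\<^sup>2" by simp
  then have "2 * e * x * y \<le> e\<^sup>2 * x\<^sup>2 + y\<^sup>2" by (simp add: power2_eq_square algebra_simps)
  then have "2 * x * y \<le> e * x\<^sup>2 + y\<^sup>2 / e" using e
    by (simp add: field_simps power2_eq_square)
  then show ?thesis using e by (simp add: power2_eq_square field_simps)
qed

lemma norm_sq_split:
  fixes u v :: "'a::real_normed_vector"
  assumes e: "0 < e"
  shows "(norm u)\<^sup>2 \<le> (1 + e) * (norm v)\<^sup>2 + (1 + 1 / e) * (norm (u - v))\<^sup>2"
proof -
  have "norm u \<le> norm v + norm (u - v)" by (metis add.commute diff_add_cancel norm_triangle_ineq)
  then have "(norm u)\<^sup>2 \<le> (norm v + norm (u - v))\<^sup>2" by (simp add: power_mono)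
  also have "\<dots> \<le> (1 + e) * (norm v)\<^sup>2 + (1 + 1 / e) * (norm (u - v))\<^sup>2" by (rule sq_split[OF e])
  finally show ?thesis .
qed

lemma amgm_e:
  fixes x y e :: real
  assumes e: "0 < e"
  shows "x * y \<le> e / 2 * x\<^sup>2 + 1 / (2 * e) * y\<^sup>2"
proof -
  have "0 \<le> (e * x - y)\<^sup>2" by simp
  then have "2 * e * x * y \<le> e\<^sup>2 * x\<^sup>2 + y\<^sup>2" by (simp add: power2_eq_square algebra_simps)
  then show ?thesis using e by (simp add: field_simps power2_eq_square)
qed

lemma tf_on_ball_sq:
  fixes phi :: "real^'n::finite \<Rightarrow> real"
  assumes tf: "test_fun (ball 0 r) phi dphi"
  shows "integrable (lebesgue_on (ball 0 r)) (\<lambda>x. (phi x)\<^sup>2)"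
    and "integrable (lebesgue_on (ball 0 r)) (\<lambda>x. (norm (dphi x))\<^sup>2)"
    and "integral\<^sup>L (lebesgue_on (ball 0 r)) (\<lambda>x. (phi x)\<^sup>2) = integral\<^sup>L lebesgue (\<lambda>x. (phi x)\<^sup>2)"
    and "integral\<^sup>L (lebesgue_on (ball 0 r)) (\<lambda>x. (norm (dphi x))\<^sup>2) = integral\<^sup>L lebesgue (\<lambda>x. (norm (dphi x))\<^sup>2)"
proof -
  note F = tf_facts[OF tf]
  have ns: "x \<notin> supp phi" if "x \<notin> ball 0 r" for x using F(4) that by blast
  have z1: "(phi x)\<^sup>2 = 0" if "x \<notin> ball 0 r" for x using F(6)[OF ns[OF that]] by simp
  have z2: "(norm (dphi x))\<^sup>2 = 0" if "x \<notin> ball 0 r" for x using F(7)[OF ns[OF that]] by simp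
  have Bs: "ball (0::real^'n) r \<in> sets lebesgue" by simp
  note I = tf_integrable_sq[OF tf]
  show "integrable (lebesgue_on (ball 0 r)) (\<lambda>x. (phi x)\<^sup>2)"
    using on_set_integral(2)[OF Bs z1] I by simp
  show "integrable (lebesgue_on (ball 0 r)) (\<lambda>x. (norm (dphi x))\<^sup>2)"
    using on_set_integral(2)[OF Bs z2] I by simp
  show "integral\<^sup>L (lebesgue_on (ball 0 r)) (\<lambda>x. (phi x)\<^sup>2) = integral\<^sup>L lebesgue (\<lambda>x. (phi x)\<^sup>2)"
    using on_set_integral(1)[OF Bs z1] by simp
  show "integral\<^sup>L (lebesgue_on (ball 0 r)) (\<lambda>x. (norm (dphi x))\<^sup>2) = integral\<^sup>L lebesgue (\<lambda>x. (norm (dphi x))\<^sup>2)"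
    using on_set_integral(1)[OF Bs z2] by simp
qed

lemma H10_approx:
  fixes w :: "real^'n::finite \<Rightarrow> real"
  assumes "H1_0 (ball 0 r) w Dw"
  obtains phi dphi where "\<And>k. test_fun (ball 0 r) (phi k) (dphi k)"
    "(\<lambda>k. integral\<^sup>L (lebesgue_on (ball 0 r)) (\<lambda>x. (phi k x - w x)\<^sup>2 + (norm (dphi k x - Dw x))\<^sup>2)) \<longlonglongrightarrow> 0"
    "\<And>k. integrable (lebesgue_on (ball 0 r)) (\<lambda>x. (phi k x - w x)\<^sup>2)"
    "\<And>k. integrable (lebesgue_on (ball 0 r)) (\<lambda>x. (norm (dphi k x - Dw x))\<^sup>2)"
proof -
  let ?\<Omega> = "lebesgue_on (ball (0::real^'n) r)"
  have Bl: "ball (0::real^'n) r \<in> lmeasurable" by simp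
  have H: "H1 (ball 0 r) w Dw" using assms unfolding H1_0_def by auto
  have wm: "w \<in> borel_measurable ?\<Omega>" and Dwm: "Dw \<in> borel_measurable ?\<Omega>"
    and w2: "integrable ?\<Omega> (\<lambda>x. (w x)\<^sup>2)" and Dw2: "integrable ?\<Omega> (\<lambda>x. (norm (Dw x))\<^sup>2)"
    using H unfolding H1_def by auto
  have wi: "integrable ?\<Omega> w" by (rule L2_L1[OF Bl wm w2])
  have nDwm: "(\<lambda>x. norm (Dw x)) \<in> borel_measurable ?\<Omega>" using Dwm by measurable
  have nDwi: "integrable ?\<Omega> (\<lambda>x. norm (Dw x))" by (rule L2_L1[OF Bl nDwm]) (use Dw2 in simp)
  obtain phi dphi where tf: "\<And>k. test_fun (ball 0 r) (phi k) (dphi k)"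
    and lim: "(\<lambda>k. integral\<^sup>L ?\<Omega> (\<lambda>x. (phi k x - w x)\<^sup>2 + (norm (dphi k x - Dw x))\<^sup>2)) \<longlonglongrightarrow> 0"
    using assms unfolding H1_0_def by blast
  have i1: "integrable ?\<Omega> (\<lambda>x. (phi k x - w x)\<^sup>2)" for k
  proof -
    note F = tf_facts[OF tf[of k]]
    obtain B where B: "\<And>x. \<bar>phi k x\<bar> \<le> B" using tf_bounds(1)[OF tf[of k]] by blast
    have "integrable ?\<Omega> (\<lambda>x. w x * phi k x)" by (rule int_bdd_mult[OF wi cont_meas_on[OF F(5)] B])
    moreover have "(\<lambda>x. (phi k x - w x)\<^sup>2) = (\<lambda>x. (phi k x)\<^sup>2 - 2 * (w x * phi k x) + (w x)\<^sup>2)"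
      by (auto simp: power2_eq_square algebra_simps)
    ultimately show ?thesis using tf_on_ball_sq(1)[OF tf[of k]] w2 by auto
  qed
  have i2: "integrable ?\<Omega> (\<lambda>x. (norm (dphi k x - Dw x))\<^sup>2)" for k
  proof -
    note F = tf_facts[OF tf[of k]]
    obtain B where B: "\<And>x. norm (dphi k x) \<le> B" using tf_bounds(2)[OF tf[of k]] by blast
    have dm: "dphi k \<in> borel_measurable ?\<Omega>" by (rule cont_meas_on[OF F(2)])
    have pm: "(\<lambda>x. dphi k x \<bullet> Dw x) \<in> borel_measurable ?\<Omega>" using dm Dwm by measurable
    have "integrable ?\<Omega> (\<lambda>x. B * norm (Dw x))" using nDwi by auto
    moreover have "AE x in ?\<Omega>. norm (dphi k x \<bullet> Dw x) \<le> norm (B * norm (Dw x))"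
    proof (rule AE_I2)
      fix x
      have "\<bar>dphi k x \<bullet> Dw x\<bar> \<le> norm (dphi k x) * norm (Dw x)" by (rule Cauchy_Schwarz_ineq2)
      also have "\<dots> \<le> B * norm (Dw x)" by (rule mult_right_mono[OF B]) simp
      finally show "norm (dphi k x \<bullet> Dw x) \<le> norm (B * norm (Dw x))" by simp
    qed
    ultimately have "integrable ?\<Omega> (\<lambda>x. dphi k x \<bullet> Dw x)"
      by (rule Bochner_Integration.integrable_bound[OF _ pm])
    moreover have "(\<lambda>x. (norm (dphi k x - Dw x))\<^sup>2) = (\<lambda>x. (norm (dphi k x))\<^sup>2 - 2 * (dphi k x \<bullet> Dw x) + (norm (Dw x))\<^sup>2)"
      by (auto simp: power2_norm_eq_inner algebra_simps inner_commute)
    ultimately show ?thesis using tf_on_ball_sq(2)[OF tf[of k]] Dw2 by auto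
  qed
  show ?thesis by (rule that[OF tf lim i1 i2])
qed



lemma poincare_H10:
  fixes w :: "real^'n::finite \<Rightarrow> real"
  assumes w: "H1_0 (ball 0 r) w Dw"
  shows "integral\<^sup>L (lebesgue_on (ball 0 r)) (\<lambda>x. (w x)\<^sup>2)
      \<le> 4 * r\<^sup>2 * integral\<^sup>L (lebesgue_on (ball 0 r)) (\<lambda>x. (norm (Dw x))\<^sup>2)"
proof -
  let ?\<Omega> = "lebesgue_on (ball (0::real^'n) r)"
  obtain phi dphi where tf: "\<And>k. test_fun (ball 0 r) (phi k) (dphi k)"
    and lim: "(\<lambda>k. integral\<^sup>L ?\<Omega> (\<lambda>x. (phi k x - w x)\<^sup>2 + (norm (dphi k x - Dw x))\<^sup>2)) \<longlonglongrightarrow> 0"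
    and i1: "\<And>k. integrable ?\<Omega> (\<lambda>x. (phi k x - w x)\<^sup>2)"
    and i2: "\<And>k. integrable ?\<Omega> (\<lambda>x. (norm (dphi k x - Dw x))\<^sup>2)"
    by (rule H10_approx[OF w]) blast
  have H: "H1 (ball 0 r) w Dw" using w unfolding H1_0_def by auto
  have w2: "integrable ?\<Omega> (\<lambda>x. (w x)\<^sup>2)" and Dw2: "integrable ?\<Omega> (\<lambda>x. (norm (Dw x))\<^sup>2)"
    using H unfolding H1_def by auto
  define a where "a k = integral\<^sup>L ?\<Omega> (\<lambda>x. (phi k x - w x)\<^sup>2 + (norm (dphi k x - Dw x))\<^sup>2)" for k
  have p1: "integral\<^sup>L ?\<Omega> (\<lambda>x. (phi k x - w x)\<^sup>2) \<le> a k" for k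
  proof -
    have "0 \<le> integral\<^sup>L ?\<Omega> (\<lambda>x. (norm (dphi k x - Dw x))\<^sup>2)" by (rule Bochner_Integration.integral_nonneg) simp
    then show ?thesis unfolding a_def using i1 i2 by simp
  qed
  have p2: "integral\<^sup>L ?\<Omega> (\<lambda>x. (norm (dphi k x - Dw x))\<^sup>2) \<le> a k" for k
  proof -
    have "0 \<le> integral\<^sup>L ?\<Omega> (\<lambda>x. (phi k x - w x)\<^sup>2)" by (rule Bochner_Integration.integral_nonneg) simp
    then show ?thesis unfolding a_def using i1 i2 by simp
  qed
  define W where "W = integral\<^sup>L ?\<Omega> (\<lambda>x. (w x)\<^sup>2)"
  define D where "D = integral\<^sup>L ?\<Omega> (\<lambda>x. (norm (Dw x))\<^sup>2)"
  have D0: "0 \<le> D" unfolding D_def by (rule Bochner_Integration.integral_nonneg) simp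
  have main: "W \<le> (1 + e)\<^sup>2 * (4 * r\<^sup>2) * D" if e: "0 < e" for e
  proof (rule lim_le[OF lim[folded a_def]])
    fix k
    define c where "c = 1 + 1 / e"
    have c0: "0 \<le> c" using e by (simp add: c_def)
    define P where "P = integral\<^sup>L ?\<Omega> (\<lambda>x. (phi k x)\<^sup>2)"
    define Q where "Q = integral\<^sup>L ?\<Omega> (\<lambda>x. (norm (dphi k x))\<^sup>2)"
    note T = tf_on_ball_sq[OF tf[of k]]
    have A1: "W \<le> (1 + e) * P + c * a k"
    proof -
      have "W \<le> integral\<^sup>L ?\<Omega> (\<lambda>x. (1 + e) * (phi k x)\<^sup>2 + c * (phi k x - w x)\<^sup>2)"
        unfolding W_def
      proof (rule integral_mono)
        show "integrable ?\<Omega> (\<lambda>x. (w x)\<^sup>2)" by (rule w2)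
        show "integrable ?\<Omega> (\<lambda>x. (1 + e) * (phi k x)\<^sup>2 + c * (phi k x - w x)\<^sup>2)"
          using T(1) i1[of k] by auto
        fix x
        have "(phi k x + (w x - phi k x))\<^sup>2 \<le> (1 + e) * (phi k x)\<^sup>2 + c * (w x - phi k x)\<^sup>2"
          unfolding c_def by (rule sq_split[OF e])
        moreover have "(w x - phi k x)\<^sup>2 = (phi k x - w x)\<^sup>2" by (simp add: power2_commute)
        ultimately show "(w x)\<^sup>2 \<le> (1 + e) * (phi k x)\<^sup>2 + c * (phi k x - w x)\<^sup>2" by simp
      qed
      also have "\<dots> = (1 + e) * P + c * integral\<^sup>L ?\<Omega> (\<lambda>x. (phi k x - w x)\<^sup>2)"
        unfolding P_def using T(1) i1[of k] by simp
      also have "\<dots> \<le> (1 + e) * P + c * a k" using mult_left_mono[OF p1[of k] c0] by simp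
      finally show ?thesis .
    qed
    have A2: "P \<le> 4 * r\<^sup>2 * Q" unfolding P_def Q_def T(3) T(4) by (rule poincare_tf[OF tf])
    have A3: "Q \<le> (1 + e) * D + c * a k"
    proof -
      have "Q \<le> integral\<^sup>L ?\<Omega> (\<lambda>x. (1 + e) * (norm (Dw x))\<^sup>2 + c * (norm (dphi k x - Dw x))\<^sup>2)"
        unfolding Q_def
      proof (rule integral_mono)
        show "integrable ?\<Omega> (\<lambda>x. (norm (dphi k x))\<^sup>2)" by (rule T(2))
        show "integrable ?\<Omega> (\<lambda>x. (1 + e) * (norm (Dw x))\<^sup>2 + c * (norm (dphi k x - Dw x))\<^sup>2)"
          using Dw2 i2[of k] by auto
        fix x show "(norm (dphi k x))\<^sup>2 \<le> (1 + e) * (norm (Dw x))\<^sup>2 + c * (norm (dphi k x - Dw x))\<^sup>2"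
          unfolding c_def by (rule norm_sq_split[OF e])
      qed
      also have "\<dots> = (1 + e) * D + c * integral\<^sup>L ?\<Omega> (\<lambda>x. (norm (dphi k x - Dw x))\<^sup>2)"
        unfolding D_def using Dw2 i2[of k] by simp
      also have "\<dots> \<le> (1 + e) * D + c * a k" using mult_left_mono[OF p2[of k] c0] by simp
      finally show ?thesis .
    qed
    have e1: "0 \<le> 1 + e" using e by simp
    have "W \<le> (1 + e) * (4 * r\<^sup>2 * Q) + c * a k" using A1 mult_left_mono[OF A2 e1] by linarith
    also have "\<dots> \<le> (1 + e) * (4 * r\<^sup>2 * ((1 + e) * D + c * a k)) + c * a k"
      using mult_left_mono[OF mult_left_mono[OF A3, of "4 * r\<^sup>2"] e1] by simp
    also have "\<dots> = (1 + e)\<^sup>2 * (4 * r\<^sup>2) * D + ((1 + e) * (4 * r\<^sup>2) * c + c) * a k"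
      by (simp add: power2_eq_square algebra_simps)
    finally show "W \<le> (1 + e)\<^sup>2 * (4 * r\<^sup>2) * D + ((1 + e) * (4 * r\<^sup>2) * c + c) * a k" .
  qed
  have "W \<le> 4 * r\<^sup>2 * D"
  proof (rule eps_le[where Z="12 * r\<^sup>2 * D"])
    fix e :: real assume e: "0 < e"
    define e' where "e' = min e 1"
    have e': "0 < e'" "e' \<le> 1" "e' \<le> e" using e by (auto simp: e'_def)
    have "(1 + e')\<^sup>2 \<le> 1 + 3 * e"
    proof -
      have h: "e' * e' \<le> e' * 1" using e' by (intro mult_left_mono) auto
      have "(1 + e')\<^sup>2 = 1 + 2 * e' + e' * e'" by (simp add: power2_eq_square algebra_simps)
      then show ?thesis using h e' by linarith
    qed
    then have "(1 + e')\<^sup>2 * (4 * r\<^sup>2 * D) \<le> (1 + 3 * e) * (4 * r\<^sup>2 * D)"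
      using D0 by (intro mult_right_mono) auto
    then show "W \<le> 4 * r\<^sup>2 * D + e * (12 * r\<^sup>2 * D)" using main[OF e'(1)]
      by (simp add: algebra_simps)
  qed
  then show ?thesis unfolding W_def D_def .
qed

context harm begin

lemma orth_H10:
  assumes Hh: "H1 (ball 0 r) h Dh" and w: "H1_0 (ball 0 r) w Dw"
  shows "integrable (lebesgue_on (ball 0 r)) (\<lambda>x. Dh x \<bullet> Dw x)"
    and "integral\<^sup>L (lebesgue_on (ball 0 r)) (\<lambda>x. Dh x \<bullet> Dw x) = 0"
proof -
  let ?\<Omega> = "lebesgue_on (ball (0::real^'n) r)"
  obtain phi dphi where tf: "\<And>k. test_fun (ball 0 r) (phi k) (dphi k)"
    and lim: "(\<lambda>k. integral\<^sup>L ?\<Omega> (\<lambda>x. (phi k x - w x)\<^sup>2 + (norm (dphi k x - Dw x))\<^sup>2)) \<longlonglongrightarrow> 0"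
    and i1: "\<And>k. integrable ?\<Omega> (\<lambda>x. (phi k x - w x)\<^sup>2)"
    and i2: "\<And>k. integrable ?\<Omega> (\<lambda>x. (norm (dphi k x - Dw x))\<^sup>2)"
    by (rule H10_approx[OF w]) blast
  have H: "H1 (ball 0 r) w Dw" using w unfolding H1_0_def by auto
  have Dwm: "Dw \<in> borel_measurable ?\<Omega>" and Dw2: "integrable ?\<Omega> (\<lambda>x. (norm (Dw x))\<^sup>2)"
    using H unfolding H1_def by auto
  have Dhm: "Dh \<in> borel_measurable ?\<Omega>" and Dh2: "integrable ?\<Omega> (\<lambda>x. (norm (Dh x))\<^sup>2)"
    using Hh unfolding H1_def by auto
  define a where "a k = integral\<^sup>L ?\<Omega> (\<lambda>x. (phi k x - w x)\<^sup>2 + (norm (dphi k x - Dw x))\<^sup>2)" for k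
  have p2: "integral\<^sup>L ?\<Omega> (\<lambda>x. (norm (dphi k x - Dw x))\<^sup>2) \<le> a k" for k
  proof -
    have "0 \<le> integral\<^sup>L ?\<Omega> (\<lambda>x. (phi k x - w x)\<^sup>2)" by (rule Bochner_Integration.integral_nonneg) simp
    then show ?thesis unfolding a_def using i1 i2 by simp
  qed
  have pw: "\<bar>Dh x \<bullet> v\<bar> \<le> e / 2 * (norm (Dh x))\<^sup>2 + 1 / (2 * e) * (norm v)\<^sup>2" if e: "0 < e" for x v e
  proof -
    have "\<bar>Dh x \<bullet> v\<bar> \<le> norm (Dh x) * norm v" by (rule Cauchy_Schwarz_ineq2)
    also have "\<dots> \<le> e / 2 * (norm (Dh x))\<^sup>2 + 1 / (2 * e) * (norm v)\<^sup>2" by (rule amgm_e[OF e])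
    finally show ?thesis .
  qed
  have pm: "(\<lambda>x. Dh x \<bullet> Dw x) \<in> borel_measurable ?\<Omega>" using Dhm Dwm by measurable
  have Xi: "integrable ?\<Omega> (\<lambda>x. Dh x \<bullet> Dw x)"
  proof -
    have "integrable ?\<Omega> (\<lambda>x. 1 / 2 * (norm (Dh x))\<^sup>2 + 1 / (2 * 1) * (norm (Dw x))\<^sup>2)"
      using Dh2 Dw2 by auto
    moreover have "AE x in ?\<Omega>. norm (Dh x \<bullet> Dw x) \<le> norm (1 / 2 * (norm (Dh x))\<^sup>2 + 1 / (2 * 1) * (norm (Dw x))\<^sup>2)"
      by (rule AE_I2) (use pw[of 1] in auto)
    ultimately show ?thesis by (rule Bochner_Integration.integrable_bound[OF _ pm])
  qed
  show "integrable ?\<Omega> (\<lambda>x. Dh x \<bullet> Dw x)" by (rule Xi)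
  define X where "X = integral\<^sup>L ?\<Omega> (\<lambda>x. Dh x \<bullet> Dw x)"
  define E where "E = integral\<^sup>L ?\<Omega> (\<lambda>x. (norm (Dh x))\<^sup>2)"
  have main: "\<bar>X\<bar> \<le> e / 2 * E" if e: "0 < e" for e
  proof (rule lim_le[OF lim[folded a_def]])
    fix k
    note O = weak_orth_tf[OF Hh tf[of k]]
    have "X = integral\<^sup>L ?\<Omega> (\<lambda>x. Dh x \<bullet> Dw x) - integral\<^sup>L ?\<Omega> (\<lambda>x. Dh x \<bullet> dphi k x)"
      unfolding X_def using O(2) by simp
    also have "\<dots> = integral\<^sup>L ?\<Omega> (\<lambda>x. Dh x \<bullet> (Dw x - dphi k x))"
      using Xi O(1) by (simp add: inner_diff_right)
    finally have Xe: "X = integral\<^sup>L ?\<Omega> (\<lambda>x. Dh x \<bullet> (Dw x - dphi k x))" .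
    have di: "integrable ?\<Omega> (\<lambda>x. Dh x \<bullet> (Dw x - dphi k x))"
      using Xi O(1) by (simp add: inner_diff_right)
    have gi: "integrable ?\<Omega> (\<lambda>x. e / 2 * (norm (Dh x))\<^sup>2 + 1 / (2 * e) * (norm (dphi k x - Dw x))\<^sup>2)"
      using Dh2 i2[of k] by auto
    have "\<bar>X\<bar> \<le> integral\<^sup>L ?\<Omega> (\<lambda>x. e / 2 * (norm (Dh x))\<^sup>2 + 1 / (2 * e) * (norm (dphi k x - Dw x))\<^sup>2)"
      unfolding Xe
    proof (rule integral_abs_bound_integral[OF di gi])
      fix x
      have "norm (Dw x - dphi k x) = norm (dphi k x - Dw x)" by (rule norm_minus_commute)
      then show "\<bar>Dh x \<bullet> (Dw x - dphi k x)\<bar> \<le> e / 2 * (norm (Dh x))\<^sup>2 + 1 / (2 * e) * (norm (dphi k x - Dw x))\<^sup>2"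
        using pw[OF e, of x "Dw x - dphi k x"] by simp
    qed
    also have "\<dots> = e / 2 * E + 1 / (2 * e) * integral\<^sup>L ?\<Omega> (\<lambda>x. (norm (dphi k x - Dw x))\<^sup>2)"
      unfolding E_def using Dh2 i2[of k] by simp
    also have "\<dots> \<le> e / 2 * E + 1 / (2 * e) * a k"
      using mult_left_mono[OF p2[of k], of "1 / (2 * e)"] e by simp
    finally show "\<bar>X\<bar> \<le> e / 2 * E + 1 / (2 * e) * a k" .
  qed
  have "\<bar>X\<bar> \<le> 0"
    by (rule eps_le[where Z="E / 2"]) (use main in auto)
  then show "integral\<^sup>L ?\<Omega> (\<lambda>x. Dh x \<bullet> Dw x) = 0" unfolding X_def by simp
qed

end



lemma xlog_le: "0 < x \<Longrightarrow> x * \<bar>ln x\<bar> \<le> 1 + x\<^sup>2" for x :: real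
proof -
  assume x: "0 < x"
  show ?thesis
  proof (cases "x \<ge> 1")
    case True
    then have l: "0 \<le> ln x" "ln x \<le> x" using ln_le_minus_one[OF x] by auto
    have "x * \<bar>ln x\<bar> = x * ln x" using l by simp
    also have "\<dots> \<le> x * x" using l x by (intro mult_left_mono) auto
    finally show ?thesis by (simp add: power2_eq_square)
  next
    case False
    then have l: "ln x \<le> 0" using x by simp
    have "ln (1 / x) \<le> 1 / x - 1" using ln_le_minus_one[of "1/x"] x by simp
    then have "- ln x \<le> 1 / x - 1" using x by (simp add: ln_div)
    then have "x * (- ln x) \<le> x * (1 / x - 1)" using x by (intro mult_left_mono) auto
    then have "x * \<bar>ln x\<bar> \<le> 1 - x" using l x by (simp add: right_diff_distrib)
    then show ?thesis using x by (smt (verit) zero_le_power2)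
  qed
qed

lemma xlog_sqrt: "0 < x \<Longrightarrow> x \<le> 1 \<Longrightarrow> x * \<bar>ln x\<bar> \<le> 2 * sqrt x" for x :: real
proof -
  assume x: "0 < x" "x \<le> 1"
  have s: "0 < sqrt x" "sqrt x * sqrt x = x" using x by auto
  have "ln (1 / sqrt x) \<le> 1 / sqrt x - 1" using ln_le_minus_one[of "1 / sqrt x"] s by simp
  then have "- ln x / 2 \<le> 1 / sqrt x - 1" using x by (simp add: ln_div ln_sqrt)
  then have "- ln x \<le> 2 / sqrt x" by (simp add: field_simps)
  moreover have "ln x \<le> 0" using x by simp
  ultimately have "\<bar>ln x\<bar> \<le> 2 / sqrt x" by simp
  then have "x * \<bar>ln x\<bar> \<le> x * (2 / sqrt x)" using x by (intro mult_left_mono) auto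
  also have "x * (2 / sqrt x) = 2 * sqrt x" using s by (simp add: field_simps)
  finally show ?thesis .
qed

lemma eta_nonneg: "C0 > 0 \<Longrightarrow> 0 \<le> eta C0 t"
  by (simp add: eta_def)

lemma eta_small: "C0 > 0 \<Longrightarrow> \<bar>t\<bar> \<le> 1 \<Longrightarrow> eta C0 t \<le> C0 * (\<bar>t\<bar> + 2 * sqrt \<bar>t\<bar>)"
proof (cases "t = 0")
  case False
  assume C: "C0 > 0" and t: "\<bar>t\<bar> \<le> 1"
  have "\<bar>t\<bar> * \<bar>ln \<bar>t\<bar>\<bar> \<le> 2 * sqrt \<bar>t\<bar>" by (rule xlog_sqrt) (use False t in auto)
  then have "C0 * (\<bar>t\<bar> * \<bar>ln \<bar>t\<bar>\<bar>) \<le> C0 * (2 * sqrt \<bar>t\<bar>)" using C by (intro mult_left_mono) auto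
  then show ?thesis using False by (simp add: eta_def algebra_simps)
qed (simp add: eta_def)

lemma eta_big: "C0 > 0 \<Longrightarrow> eta C0 t \<le> C0 * (2 + 2 * t\<^sup>2)"
proof (cases "t = 0")
  case False
  assume C: "C0 > 0"
  have a: "\<bar>t\<bar> * \<bar>ln \<bar>t\<bar>\<bar> \<le> 1 + \<bar>t\<bar>\<^sup>2" by (rule xlog_le) (use False in auto)
  have b: "\<bar>t\<bar> \<le> 1 + t\<^sup>2"
  proof (cases "\<bar>t\<bar> \<le> 1")
    case True then show ?thesis by (smt (verit) zero_le_power2)
  next
    case False
    have "1 * \<bar>t\<bar> \<le> \<bar>t\<bar> * \<bar>t\<bar>" by (rule mult_right_mono) (use False in auto)
    then show ?thesis by (simp add: power2_eq_square)
  qed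
  have "\<bar>t\<bar> * (1 + \<bar>ln \<bar>t\<bar>\<bar>) \<le> 2 + 2 * t\<^sup>2" using a b by (simp add: algebra_simps)
  then have "C0 * (\<bar>t\<bar> * (1 + \<bar>ln \<bar>t\<bar>\<bar>)) \<le> C0 * (2 + 2 * t\<^sup>2)" using C by (intro mult_left_mono) auto
  then show ?thesis using False by (simp add: eta_def algebra_simps)
qed (simp add: eta_def)

lemma eta_le:
  assumes C: "C0 > 0" and d: "0 < \<delta>"
  shows "eta C0 s \<le> C0 * (2 * s\<^sup>2 / \<delta> + \<delta> + \<delta> * (1 + \<bar>ln \<delta>\<bar>)\<^sup>2 / 4)"
proof -
  define L where "L = 1 + \<bar>ln \<delta>\<bar>"
  have am: "L * \<bar>s\<bar> \<le> \<delta> / 4 * L\<^sup>2 + 1 / \<delta> * s\<^sup>2"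
    using amgm_e[of "\<delta> / 2" L "\<bar>s\<bar>"] d by simp
  have key: "\<bar>s\<bar> * (1 + \<bar>ln \<bar>s\<bar>\<bar>) \<le> L * \<bar>s\<bar> + \<delta> + s\<^sup>2 / \<delta>" if s: "s \<noteq> 0"
  proof -
    define x where "x = \<bar>s\<bar> / \<delta>"
    have x: "0 < x" using s d by (simp add: x_def)
    have lnx: "ln \<bar>s\<bar> = ln \<delta> + ln x" using s d by (simp add: x_def ln_div)
    have "\<bar>ln \<bar>s\<bar>\<bar> \<le> \<bar>ln \<delta>\<bar> + \<bar>ln x\<bar>" unfolding lnx by (rule abs_triangle_ineq)
    then have "\<bar>s\<bar> * \<bar>ln \<bar>s\<bar>\<bar> \<le> \<bar>s\<bar> * (\<bar>ln \<delta>\<bar> + \<bar>ln x\<bar>)" by (intro mult_left_mono) auto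
    moreover have "\<bar>s\<bar> * \<bar>ln x\<bar> \<le> \<delta> + s\<^sup>2 / \<delta>"
    proof -
      have "\<bar>s\<bar> * \<bar>ln x\<bar> = \<delta> * (x * \<bar>ln x\<bar>)" using d by (simp add: x_def)
      also have "\<dots> \<le> \<delta> * (1 + x\<^sup>2)" using xlog_le[OF x] d by (intro mult_left_mono) auto
      also have "\<dots> = \<delta> + s\<^sup>2 / \<delta>" using d by (simp add: x_def power2_eq_square field_simps)
      finally show ?thesis .
    qed
    ultimately show ?thesis unfolding L_def by (simp add: algebra_simps)
  qed
  show ?thesis
  proof (cases "s = 0")
    case True then show ?thesis using C d by (simp add: eta_def)
  next
    case False
    have "\<bar>s\<bar> * (1 + \<bar>ln \<bar>s\<bar>\<bar>) \<le> 2 * s\<^sup>2 / \<delta> + \<delta> + \<delta> * L\<^sup>2 / 4"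
      using key[OF False] am by (simp add: field_simps)
    then have "C0 * (\<bar>s\<bar> * (1 + \<bar>ln \<bar>s\<bar>\<bar>)) \<le> C0 * (2 * s\<^sup>2 / \<delta> + \<delta> + \<delta> * L\<^sup>2 / 4)"
      using C by (intro mult_left_mono) auto
    then show ?thesis using False by (simp add: eta_def L_def mult.assoc)
  qed
qed

lemma g_cont:
  assumes C: "C0 > 0" and g: "\<And>t s. \<bar>g t - g s\<bar> \<le> eta C0 (t - s)"
  shows "continuous_on UNIV g"
proof (intro continuous_at_imp_continuous_on ballI)
  fix s :: real
  have lim0: "((\<lambda>t. C0 * (\<bar>t - s\<bar> + 2 * sqrt \<bar>t - s\<bar>)) \<longlongrightarrow> C0 * (\<bar>s - s\<bar> + 2 * sqrt \<bar>s - s\<bar>)) (at s)"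
    by (intro tendsto_intros)
  then have lim0': "((\<lambda>t. C0 * (\<bar>t - s\<bar> + 2 * sqrt \<bar>t - s\<bar>)) \<longlongrightarrow> 0) (at s)" by simp
  have ev: "eventually (\<lambda>t. norm (g t - g s) \<le> C0 * (\<bar>t - s\<bar> + 2 * sqrt \<bar>t - s\<bar>)) (at s)"
  proof -
    have "eventually (\<lambda>t. dist t s < 1) (at s)" unfolding eventually_at by (rule exI[of _ 1]) auto
    then show ?thesis
    proof (rule eventually_mono)
      fix t assume "dist t s < 1"
      then have "\<bar>t - s\<bar> \<le> 1" by (simp add: dist_real_def)
      then show "norm (g t - g s) \<le> C0 * (\<bar>t - s\<bar> + 2 * sqrt \<bar>t - s\<bar>)"
        using g[of t s] eta_small[OF C, of "t - s"] by simp
    qed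
  qed
  have "((\<lambda>t. g t - g s) \<longlongrightarrow> 0) (at s)" by (rule Lim_null_comparison[OF ev lim0'])
  then have "(g \<longlongrightarrow> g s) (at s)" by (rule LIM_zero_cancel)
  then show "isCont g s" by (simp add: isCont_def)
qed

lemma g_int:
  fixes v :: "real^'n::finite \<Rightarrow> real"
  assumes C: "C0 > 0" and g: "\<And>t s. \<bar>g t - g s\<bar> \<le> eta C0 (t - s)"
    and S: "S \<in> lmeasurable" and vm: "v \<in> borel_measurable (lebesgue_on S)"
    and v2: "integrable (lebesgue_on S) (\<lambda>x. (v x)\<^sup>2)"
  shows "integrable (lebesgue_on S) (\<lambda>x. g (v x))"
proof -
  have gm: "g \<in> borel_measurable borel" by (rule borel_measurable_continuous_onI[OF g_cont[OF C g]])
  have m: "(\<lambda>x. g (v x)) \<in> borel_measurable (lebesgue_on S)" by (rule measurable_compose[OF vm gm])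
  have i: "integrable (lebesgue_on S) (\<lambda>x. \<bar>g 0\<bar> + C0 * (2 + 2 * (v x)\<^sup>2))"
    using const_int_on[OF S] v2 by auto
  have "AE x in lebesgue_on S. norm (g (v x)) \<le> norm (\<bar>g 0\<bar> + C0 * (2 + 2 * (v x)\<^sup>2))"
  proof (rule AE_I2)
    fix x
    have "\<bar>g (v x) - g 0\<bar> \<le> C0 * (2 + 2 * (v x)\<^sup>2)" using g[of "v x" 0] eta_big[OF C, of "v x"] by simp
    moreover have "0 \<le> C0 * (2 + 2 * (v x)\<^sup>2)" using C by simp
    ultimately show "norm (g (v x)) \<le> norm (\<bar>g 0\<bar> + C0 * (2 + 2 * (v x)\<^sup>2))" by simp
  qed
  then show ?thesis by (rule Bochner_Integration.integrable_bound[OF i m])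
qed

lemma const_int_val:
  assumes "S \<in> lmeasurable"
  shows "integral\<^sup>L (lebesgue_on S) (\<lambda>x. c::real) = c * measure lebesgue S"
proof -
  have "integral\<^sup>L (lebesgue_on S) (\<lambda>x. c) = integral\<^sup>L lebesgue (\<lambda>x. indicator S x *\<^sub>R c)"
    using assms by (subst integral_restrict_space) (auto simp: fmeasurable_def)
  also have "\<dots> = measure lebesgue S *\<^sub>R c"
    using has_bochner_integral_indicator[of S lebesgue c] assms
    by (auto simp: fmeasurable_def has_bochner_integral_iff)
  finally show ?thesis by simp
qed



lemma final_arith:
  fixes C0 r L P Q A V :: real
  assumes C: "C0 > 0" and r: "r > 0" and V: "V > 0"
    and A: "A \<le> 128 * C0\<^sup>2 * r\<^sup>2 * (1 + L\<^sup>2 / 4) * V"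
    and L0: "0 \<le> L" and LPQ: "L \<le> P * Q" and P: "1 \<le> P" and Q: "1 \<le> Q"
    and eta: "E = C0 * r\<^sup>2 * Q"
  shows "1 / V * A \<le> 160 * P\<^sup>2 * E\<^sup>2 / r\<^sup>2"
proof -
  have "1 / V * A \<le> 1 / V * (128 * C0\<^sup>2 * r\<^sup>2 * (1 + L\<^sup>2 / 4) * V)"
    using A V by (intro mult_left_mono) auto
  also have "\<dots> = C0\<^sup>2 * r\<^sup>2 * (128 + 32 * L\<^sup>2)" using V by (simp add: field_simps)
  also have "\<dots> \<le> C0\<^sup>2 * r\<^sup>2 * (160 * P\<^sup>2 * Q\<^sup>2)"
  proof (intro mult_left_mono)
    have PQ: "1 \<le> P * Q" using P Q by (metis mult_mono' mult_1 zero_le_one order_trans)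
    have "L\<^sup>2 \<le> (P * Q)\<^sup>2" using L0 LPQ by (intro power_mono) auto
    moreover have "1 \<le> (P * Q)\<^sup>2" using PQ by (metis one_le_power)
    ultimately show "128 + 32 * L\<^sup>2 \<le> 160 * P\<^sup>2 * Q\<^sup>2" by (simp add: power_mult_distrib)
  qed auto
  also have "\<dots> = 160 * P\<^sup>2 * E\<^sup>2 / r\<^sup>2" using r unfolding eta by (simp add: power2_eq_square field_simps)
  finally show ?thesis .
qed

theorem mainTheorem4:
  fixes C0 :: real
  assumes "CARD('n::finite) \<ge> 3" and "C0 > 0"
  shows "\<exists>cs>0. \<exists>C. \<forall>(r::real) (g::real \<Rightarrow> real) (u::real^'n \<Rightarrow> real) Du h Dh.
     0 < r \<and> r \<le> 1 \<and>
     (\<forall>t s. \<bar>g t - g s\<bar> \<le> eta C0 (t - s)) \<and>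
     minimizer (ball 0 r) g u Du \<and>
     ess_osc (ball 0 r) u \<le> ereal cs \<and>
     harmonic_on (ball 0 r) h \<and> H1 (ball 0 r) h Dh \<and>
     H1_0 (ball 0 r) (\<lambda>x. h x - u x) (\<lambda>x. Dh x - Du x)
     \<longrightarrow> (1 / measure lebesgue (ball (0::real^'n) r)) *
           integral\<^sup>L (lebesgue_on (ball 0 r)) (\<lambda>x. (norm (Du x - Dh x))\<^sup>2)
         \<le> C * (eta C0 (r\<^sup>2))\<^sup>2 / r\<^sup>2"
proof -
  note C = assms(2)
  define P where "P = 1 + \<bar>ln (32 * C0)\<bar>"
  have "\<forall>(r::real) (g::real \<Rightarrow> real) (u::real^'n \<Rightarrow> real) Du h Dh.
     0 < r \<and> r \<le> 1 \<and>
     (\<forall>t s. \<bar>g t - g s\<bar> \<le> eta C0 (t - s)) \<and>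
     minimizer (ball 0 r) g u Du \<and>
     ess_osc (ball 0 r) u \<le> ereal 1 \<and>
     harmonic_on (ball 0 r) h \<and> H1 (ball 0 r) h Dh \<and>
     H1_0 (ball 0 r) (\<lambda>x. h x - u x) (\<lambda>x. Dh x - Du x)
     \<longrightarrow> (1 / measure lebesgue (ball (0::real^'n) r)) *
           integral\<^sup>L (lebesgue_on (ball 0 r)) (\<lambda>x. (norm (Du x - Dh x))\<^sup>2)
         \<le> (160 * P\<^sup>2) * (eta C0 (r\<^sup>2))\<^sup>2 / r\<^sup>2"
  proof (intro allI impI, elim conjE)
    fix r :: real and g :: "real \<Rightarrow> real" and u :: "real^'n \<Rightarrow> real" and Du h Dh
    assume r0: "0 < r" and r1: "r \<le> 1" and gL: "\<forall>t s. \<bar>g t - g s\<bar> \<le> eta C0 (t - s)"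
      and mi: "minimizer (ball 0 r) g u Du" and harmo: "harmonic_on (ball 0 r) h"
      and Hh: "H1 (ball 0 r) h Dh" and w: "H1_0 (ball 0 r) (\<lambda>x. h x - u x) (\<lambda>x. Dh x - Du x)"
    let ?\<Omega> = "lebesgue_on (ball (0::real^'n) r)"
    define V where "V = measure lebesgue (ball (0::real^'n) r)"
    have Bl: "ball (0::real^'n) r \<in> lmeasurable" by simp
    have V0: "V > 0" unfolding V_def using content_ball_pos[OF r0, of 0]
      by (simp add: measure_completion)
    have g': "\<And>t s. \<bar>g t - g s\<bar> \<le> eta C0 (t - s)" using gL by blast
    obtain Dc D2h where
      h1: "\<forall>x\<in>ball 0 r. (h has_derivative (\<lambda>v. Dc x \<bullet> v)) (at x)" and
      h2: "\<forall>x\<in>ball 0 r. (Dc has_derivative D2h x) (at x)" and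
      h3: "continuous_on (ball 0 r) (\<lambda>x. \<chi> i j. D2h x (axis j 1) $ i)" and
      h4: "\<forall>x\<in>ball 0 r. (\<Sum>i\<in>UNIV. D2h x (axis i 1) $ i) = 0"
      using harmo unfolding harmonic_on_def by blast
    interpret H: harm r h Dc D2h
      by unfold_locales (use h1 h2 h3 h4 in auto)
    have Hu: "H1 (ball 0 r) u Du" using mi unfolding minimizer_def by blast
    have Gle: "Gfun (ball 0 r) g u Du \<le> Gfun (ball 0 r) g h Dh"
      using mi Hh w unfolding minimizer_def by blast
    have um: "u \<in> borel_measurable ?\<Omega>" and u2: "integrable ?\<Omega> (\<lambda>x. (u x)\<^sup>2)"
      and Du2: "integrable ?\<Omega> (\<lambda>x. (norm (Du x))\<^sup>2)" using Hu unfolding H1_def by auto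
    have hm: "h \<in> borel_measurable ?\<Omega>" and h2i: "integrable ?\<Omega> (\<lambda>x. (h x)\<^sup>2)"
      and Dh2: "integrable ?\<Omega> (\<lambda>x. (norm (Dh x))\<^sup>2)" using Hh unfolding H1_def by auto
    have Hw: "H1 (ball 0 r) (\<lambda>x. h x - u x) (\<lambda>x. Dh x - Du x)" using w unfolding H1_0_def by auto
    have W2: "integrable ?\<Omega> (\<lambda>x. (h x - u x)\<^sup>2)" using Hw unfolding H1_def by auto
    have gu: "integrable ?\<Omega> (\<lambda>x. g (u x))" by (rule g_int[OF C g' Bl um u2])
    have gh: "integrable ?\<Omega> (\<lambda>x. g (h x))" by (rule g_int[OF C g' Bl hm h2i])
    define EU where "EU = integral\<^sup>L ?\<Omega> (\<lambda>x. (norm (Du x))\<^sup>2)"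
    define EH where "EH = integral\<^sup>L ?\<Omega> (\<lambda>x. (norm (Dh x))\<^sup>2)"
    define A where "A = integral\<^sup>L ?\<Omega> (\<lambda>x. (norm (Du x - Dh x))\<^sup>2)"
    have GU: "Gfun (ball 0 r) g u Du = EU / 2 + integral\<^sup>L ?\<Omega> (\<lambda>x. g (u x))"
      unfolding Gfun_def EU_def using Du2 gu by simp
    have GH: "Gfun (ball 0 r) g h Dh = EH / 2 + integral\<^sup>L ?\<Omega> (\<lambda>x. g (h x))"
      unfolding Gfun_def EH_def using Dh2 gh by simp
    note O = H.orth_H10[OF Hh w]
    have AE: "A = EU - EH"
    proof -
      have pw: "(norm (Du x - Dh x))\<^sup>2 = (norm (Du x))\<^sup>2 - (norm (Dh x))\<^sup>2 + 2 * (Dh x \<bullet> (Dh x - Du x))" for x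
        by (simp add: power2_norm_eq_inner algebra_simps inner_commute)
      have "A = integral\<^sup>L ?\<Omega> (\<lambda>x. (norm (Du x))\<^sup>2 - (norm (Dh x))\<^sup>2 + 2 * (Dh x \<bullet> (Dh x - Du x)))"
        unfolding A_def pw ..
      also have "\<dots> = EU - EH + 2 * integral\<^sup>L ?\<Omega> (\<lambda>x. Dh x \<bullet> (Dh x - Du x))"
        unfolding EU_def EH_def using Du2 Dh2 O(1) by simp
      also have "\<dots> = EU - EH" using O(2) by simp
      finally show ?thesis .
    qed
    define \<delta> where "\<delta> = 32 * C0 * r\<^sup>2"
    have d0: "0 < \<delta>" using C r0 by (simp add: \<delta>_def)
    define L where "L = 1 + \<bar>ln \<delta>\<bar>"
    have A1: "A \<le> 2 * integral\<^sup>L ?\<Omega> (\<lambda>x. g (h x) - g (u x))"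
      using Gle GU GH AE gu gh by simp
    have A2: "integral\<^sup>L ?\<Omega> (\<lambda>x. g (h x) - g (u x))
        \<le> integral\<^sup>L ?\<Omega> (\<lambda>x. C0 * (2 * (h x - u x)\<^sup>2 / \<delta> + \<delta> + \<delta> * L\<^sup>2 / 4))"
    proof (rule integral_mono)
      show "integrable ?\<Omega> (\<lambda>x. g (h x) - g (u x))" using gu gh by auto
      show "integrable ?\<Omega> (\<lambda>x. C0 * (2 * (h x - u x)\<^sup>2 / \<delta> + \<delta> + \<delta> * L\<^sup>2 / 4))"
        using W2 const_int_on[OF Bl] by auto
      fix x
      have "g (h x) - g (u x) \<le> eta C0 (h x - u x)" using g'[of "h x" "u x"] by simp
      also have "\<dots> \<le> C0 * (2 * (h x - u x)\<^sup>2 / \<delta> + \<delta> + \<delta> * L\<^sup>2 / 4)"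
        unfolding L_def by (rule eta_le[OF C d0])
      finally show "g (h x) - g (u x) \<le> C0 * (2 * (h x - u x)\<^sup>2 / \<delta> + \<delta> + \<delta> * L\<^sup>2 / 4)" .
    qed
    define WW where "WW = integral\<^sup>L ?\<Omega> (\<lambda>x. (h x - u x)\<^sup>2)"
    have A3: "integral\<^sup>L ?\<Omega> (\<lambda>x. C0 * (2 * (h x - u x)\<^sup>2 / \<delta> + \<delta> + \<delta> * L\<^sup>2 / 4))
        = C0 * (2 / \<delta> * WW + (\<delta> + \<delta> * L\<^sup>2 / 4) * V)"
    proof -
      have "(\<lambda>x. C0 * (2 * (h x - u x)\<^sup>2 / \<delta> + \<delta> + \<delta> * L\<^sup>2 / 4))
          = (\<lambda>x. C0 * (2 / \<delta>) * (h x - u x)\<^sup>2 + C0 * (\<delta> + \<delta> * L\<^sup>2 / 4))"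
        by (auto simp: algebra_simps)
      then show ?thesis unfolding WW_def V_def using W2 const_int_on[OF Bl]
        by (simp add: algebra_simps measure_restrict_space)
    qed
    have PW: "WW \<le> 4 * r\<^sup>2 * A"
    proof -
      have "WW \<le> 4 * r\<^sup>2 * integral\<^sup>L ?\<Omega> (\<lambda>x. (norm (Dh x - Du x))\<^sup>2)"
        unfolding WW_def by (rule poincare_H10[OF w])
      moreover have "(\<lambda>x. (norm (Dh x - Du x))\<^sup>2) = (\<lambda>x. (norm (Du x - Dh x))\<^sup>2)"
        by (simp add: norm_minus_commute)
      ultimately show ?thesis unfolding A_def by simp
    qed
    have "A \<le> 2 * (C0 * (2 / \<delta> * WW + (\<delta> + \<delta> * L\<^sup>2 / 4) * V))"
      using A1 A2 A3 by linarith
    also have "\<dots> \<le> 2 * (C0 * (2 / \<delta> * (4 * r\<^sup>2 * A) + (\<delta> + \<delta> * L\<^sup>2 / 4) * V))"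
    proof -
      have "2 / \<delta> * WW \<le> 2 / \<delta> * (4 * r\<^sup>2 * A)" by (rule mult_left_mono[OF PW]) (use d0 in simp)
      then have "C0 * (2 / \<delta> * WW + (\<delta> + \<delta> * L\<^sup>2 / 4) * V)
          \<le> C0 * (2 / \<delta> * (4 * r\<^sup>2 * A) + (\<delta> + \<delta> * L\<^sup>2 / 4) * V)"
        using C by (intro mult_left_mono) auto
      then show ?thesis by linarith
    qed
    also have "\<dots> = A / 2 + 2 * C0 * \<delta> * (1 + L\<^sup>2 / 4) * V"
      using C r0 by (simp add: \<delta>_def field_simps power2_eq_square)
    finally have "A \<le> 4 * C0 * \<delta> * (1 + L\<^sup>2 / 4) * V" by simp
    then have Afin: "A \<le> 128 * C0\<^sup>2 * r\<^sup>2 * (1 + L\<^sup>2 / 4) * V"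
      by (simp add: \<delta>_def power2_eq_square algebra_simps)
    define Q where "Q = 1 + 2 * \<bar>ln r\<bar>"
    have lnd: "ln \<delta> = ln (32 * C0) + 2 * ln r"
      using C r0 by (simp add: \<delta>_def ln_mult ln_realpow)
    have LPQ: "L \<le> P * Q"
    proof -
      have "\<bar>ln \<delta>\<bar> \<le> \<bar>ln (32 * C0)\<bar> + 2 * \<bar>ln r\<bar>" unfolding lnd by linarith
      moreover have "0 \<le> \<bar>ln (32 * C0)\<bar> * (2 * \<bar>ln r\<bar>)" by simp
      moreover have "P * Q = 1 + \<bar>ln (32 * C0)\<bar> + 2 * \<bar>ln r\<bar> + \<bar>ln (32 * C0)\<bar> * (2 * \<bar>ln r\<bar>)"
        by (simp add: P_def Q_def algebra_simps)
      ultimately show ?thesis unfolding L_def by linarith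
    qed
    have etar: "eta C0 (r\<^sup>2) = C0 * r\<^sup>2 * Q"
      using r0 by (simp add: eta_def Q_def ln_realpow abs_mult)
    have "1 / V * A \<le> 160 * P\<^sup>2 * (eta C0 (r\<^sup>2))\<^sup>2 / r\<^sup>2"
      by (rule final_arith[OF C r0 V0 Afin _ LPQ _ _ etar]) (auto simp: L_def P_def Q_def)
    then show "1 / measure lebesgue (ball (0::real^'n) r) * integral\<^sup>L ?\<Omega> (\<lambda>x. (norm (Du x - Dh x))\<^sup>2)
        \<le> 160 * P\<^sup>2 * (eta C0 (r\<^sup>2))\<^sup>2 / r\<^sup>2"
      unfolding V_def A_def .
  qed
  then show ?thesis by (intro exI[of _ "1::real"] conjI exI[of _ "160 * P\<^sup>2"]) simp_all
qed


end
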